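(* Let $V$ be a real vector space of dimension $2n$ and $F=(0=V_0\subset V_1\subset\dots\subset V_{2n}=V)$ a full flag with $\dim V_j=j$. Let $\Omega(F)$ be the space of symplectic forms $\omega$ on $V$ such that $V_j$ is $\omega$-isotropic for $j\le n$, $V_j$ is $\omega$-coisotropic for $j\ge n$, and $V_j^{\perp_\omega}=V_{2n-j}$ for $j\le n$. For $\omega\in\Omega(F)$ and $0\le j\le n-1$, $\omega$ induces a symplectic form on the quotient $V_{2n-j}/V_j$, hence an orientation of it. Then the map sending $\omega$ to this $n$-tuple of orientations induces a bijection between the set of connected components of $\Omega(F)$ and the set of all $n$-tuples of orientations of the spaces $V_{2n-j}/V_j$, $j=0,\dots,n-1$ (every tuple occurs), and each connected component of $\Omega(F)$ is convex. *)

theory Defs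
  imports "HOL-Analysis.Analysis"
begin

text \<open>Real bilinear forms on a finite-dimensional real vector space 'v are
modelled as functions 'v \<Rightarrow> 'v \<Rightarrow> real (with the product/pointwise topology
of the function space, which on bilinear forms agrees with the usual
finite-dimensional topology).\<close>

definition symplectic_form :: "('v::euclidean_space \<Rightarrow> 'v \<Rightarrow> real) \<Rightarrow> bool" where
  "symplectic_form \<omega> \<longleftrightarrow> bilinear \<omega> \<and> (\<forall>v. \<omega> v v = 0)
     \<and> (\<forall>v. (\<forall>w. \<omega> v w = 0) \<longrightarrow> v = 0)"

definition sorth :: "('v \<Rightarrow> 'v \<Rightarrow> real) \<Rightarrow> 'v set \<Rightarrow> 'v set" where
  "sorth \<omega> W = {v. \<forall>w\<in>W. \<omega> v w = 0}"

definition isotropic :: "('v \<Rightarrow> 'v \<Rightarrow> real) \<Rightarrow> 'v set \<Rightarrow> bool" where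
  "isotropic \<omega> W \<longleftrightarrow> W \<subseteq> sorth \<omega> W"

definition coisotropic :: "('v \<Rightarrow> 'v \<Rightarrow> real) \<Rightarrow> 'v set \<Rightarrow> bool" where
  "coisotropic \<omega> W \<longleftrightarrow> sorth \<omega> W \<subseteq> W"

definition full_flag :: "nat \<Rightarrow> (nat \<Rightarrow> 'v::euclidean_space set) \<Rightarrow> bool" where
  "full_flag n F \<longleftrightarrow> (\<forall>j\<le>2*n. subspace (F j) \<and> dim (F j) = j)
     \<and> (\<forall>j<2*n. F j \<subseteq> F (Suc j)) \<and> F 0 = {0} \<and> F (2*n) = UNIV"

definition OmegaF :: "nat \<Rightarrow> (nat \<Rightarrow> 'v::euclidean_space set) \<Rightarrow> ('v \<Rightarrow> 'v \<Rightarrow> real) set" where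
  "OmegaF n F = {\<omega>. symplectic_form \<omega>
     \<and> (\<forall>j\<le>n. isotropic \<omega> (F j))
     \<and> (\<forall>j. n \<le> j \<and> j \<le> 2*n \<longrightarrow> coisotropic \<omega> (F j))
     \<and> (\<forall>j\<le>n. sorth \<omega> (F j) = F (2*n - j))}"

text \<open>Ordered bases of the quotient A/B (B \<subseteq> A subspaces), represented by lists of
vectors of A whose images in A/B form a basis.\<close>
definition qbasis :: "'v::euclidean_space set \<Rightarrow> 'v set \<Rightarrow> 'v list \<Rightarrow> bool" where
  "qbasis A B bs \<longleftrightarrow> length bs = dim A - dim B \<and> set bs \<subseteq> A
     \<and> (\<forall>c. (\<Sum>i<length bs. c i *\<^sub>R bs ! i) \<in> B \<longrightarrow> (\<forall>i<length bs. c i = 0))"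

definition ldet :: "nat \<Rightarrow> (nat \<Rightarrow> nat \<Rightarrow> real) \<Rightarrow> real" where
  "ldet d M = (\<Sum>p | p permutes {..<d}. of_int (sign p) * (\<Prod>i<d. M i (p i)))"

definition same_orient :: "'v::euclidean_space set \<Rightarrow> 'v set \<Rightarrow> 'v list \<Rightarrow> 'v list \<Rightarrow> bool" where
  "same_orient A B bs cs \<longleftrightarrow> qbasis A B bs \<and> qbasis A B cs \<and>
     (\<exists>M. (\<forall>i<length cs. cs ! i - (\<Sum>j<length bs. M i j *\<^sub>R bs ! j) \<in> B)
          \<and> ldet (length bs) M > 0)"

definition orientations :: "'v::euclidean_space set \<Rightarrow> 'v set \<Rightarrow> 'v list set set" where
  "orientations A B = {{cs. same_orient A B bs cs} | bs. qbasis A B bs}"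

text \<open>Symplectic ordered basis (e_1, f_1, ..., e_k, f_k) of A/B for the form induced by
\<omega>: \<omega>(e_i,f_i) = 1, all other pairings (with i \<le> j order) zero.\<close>
definition sympl_qbasis :: "('v \<Rightarrow> 'v \<Rightarrow> real) \<Rightarrow> 'v::euclidean_space set \<Rightarrow> 'v set \<Rightarrow> 'v list \<Rightarrow> bool" where
  "sympl_qbasis \<omega> A B cs \<longleftrightarrow> qbasis A B cs \<and>
     (\<forall>i<length cs. \<forall>j<length cs.
        \<omega> (cs ! i) (cs ! j) =
          (if even i \<and> j = Suc i then 1 else if even j \<and> i = Suc j then -1 else 0))"

text \<open>The orientation of A/B induced by the symplectic form induced by \<omega>
(the orientation of \<omega>^k, i.e. of a symplectic basis).\<close>
definition induced_orient :: "('v \<Rightarrow> 'v \<Rightarrow> real) \<Rightarrow> 'v::euclidean_space set \<Rightarrow> 'v set \<Rightarrow> 'v list set" where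
  "induced_orient \<omega> A B = {bs. \<exists>cs. sympl_qbasis \<omega> A B cs \<and> same_orient A B cs bs}"

definition convex_forms :: "('v \<Rightarrow> 'v \<Rightarrow> real) set \<Rightarrow> bool" where
  "convex_forms C \<longleftrightarrow> (\<forall>x\<in>C. \<forall>y\<in>C. \<forall>t::real. 0 \<le> t \<and> t \<le> 1 \<longrightarrow>
      (\<lambda>u v. t * x u v + (1 - t) * y u v) \<in> C)"

end

theory Submission
  imports Defs "Jordan_Normal_Form.Determinant"
begin

lemma ldet_JNF: "ldet d M = Determinant.det (Matrix.mat d d (\<lambda>(i,j). M i j))"
  unfolding ldet_def Determinant.det_def by (simp add: atLeast0LessThan)

lemma ldet_mult:
  "ldet d (\<lambda>i k. \<Sum>l<d. A i l * B l k) = ldet d A * ldet d B"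
proof -
  let ?A = "Matrix.mat d d (\<lambda>(i,j). A i j)" and ?B = "Matrix.mat d d (\<lambda>(i,j). B i j)"
  have "Matrix.mat d d (\<lambda>(i,k). \<Sum>l<d. A i l * B l k) = ?A * ?B"
    by (rule eq_matI) (auto simp: scalar_prod_def atLeast0LessThan intro!: sum.cong)
  then show ?thesis unfolding ldet_JNF using det_mult[of ?A d ?B] by simp
qed

lemma ldet_lower:
  assumes "\<And>i k. i < k \<Longrightarrow> k < d \<Longrightarrow> A i k = 0"
  shows "ldet d A = (\<Prod>i<d. A i i)"
  unfolding ldet_JNF
  by (subst det_lower_triangular[of d]) (auto simp: assms prod_list_diag_prod atLeast0LessThan)

lemma ldet_nonzero_iff:
  "ldet d A \<noteq> 0 \<longleftrightarrow> (\<forall>c. (\<forall>k<d. (\<Sum>i<d. c i * A i k) = 0) \<longrightarrow> (\<forall>i<d. c i = 0))"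
proof -
  let ?A = "Matrix.mat d d (\<lambda>(i,j). A i j)"
  let ?T = "transpose_mat ?A"
  have T: "?T \<in> carrier_mat d d" by simp
  have dT: "ldet d A = Determinant.det ?T" unfolding ldet_JNF using det_transpose[of ?A d] by simp
  have mv: "\<And>v. v \<in> carrier_vec d \<Longrightarrow> ?T *\<^sub>v v = vec d (\<lambda>k. \<Sum>i<d. v $ i * A i k)"
    by (rule eq_vecI) (auto simp: scalar_prod_def atLeast0LessThan mult.commute intro!: sum.cong)
  show ?thesis
  proof
    assume nz: "ldet d A \<noteq> 0"
    show "\<forall>c. (\<forall>k<d. (\<Sum>i<d. c i * A i k) = 0) \<longrightarrow> (\<forall>i<d. c i = 0)"
    proof (intro allI impI)
      fix c i assume c: "\<forall>k<d. (\<Sum>i<d. c i * A i k) = 0" and i: "i < d"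
      show "c i = 0"
      proof (rule ccontr)
        assume ci: "c i \<noteq> 0"
        let ?v = "vec d c"
        have "?v \<noteq> 0\<^sub>v d" using ci i by (metis index_vec index_zero_vec(1))
        moreover have "?T *\<^sub>v ?v = 0\<^sub>v d"
          by (subst mv) (auto intro!: eq_vecI simp: c)
        ultimately have "Determinant.det ?T = 0"
          using det_0_iff_vec_prod_zero_field[OF T] by (metis vec_carrier)
        with nz dT show False by simp
      qed
    qed
  next
    assume H: "\<forall>c. (\<forall>k<d. (\<Sum>i<d. c i * A i k) = 0) \<longrightarrow> (\<forall>i<d. c i = 0)"
    show "ldet d A \<noteq> 0"
    proof
      assume "ldet d A = 0"
      then obtain v where v: "v \<in> carrier_vec d" "v \<noteq> 0\<^sub>v d" "?T *\<^sub>v v = 0\<^sub>v d"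
        using det_0_iff_vec_prod_zero_field[OF T] dT by auto
      have "\<forall>k<d. (\<Sum>i<d. v $ i * A i k) = 0"
      proof (intro allI impI)
        fix k assume k: "k < d"
        have "(?T *\<^sub>v v) $ k = 0" using v(3) k by simp
        then show "(\<Sum>i<d. v $ i * A i k) = 0" using mv[OF v(1)] k by simp
      qed
      with H have "\<forall>i<d. v $ i = 0" by blast
      then have "v = 0\<^sub>v d" using v(1) by (intro eq_vecI) auto
      with v(2) show False by simp
    qed
  qed
qed

lemma ldet_inverse:
  assumes "ldet d A \<noteq> 0"
  shows "\<exists>B. \<forall>i<d. \<forall>k<d. (\<Sum>l<d. B i l * A l k) = (if i = k then 1 else 0)"
proof -
  let ?A = "Matrix.mat d d (\<lambda>(i,j). A i j)"
  have Ac: "?A \<in> carrier_mat d d" by simp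
  let ?D = "Determinant.det ?A"
  have D: "?D \<noteq> 0" using assms unfolding ldet_JNF by simp
  have adj: "adj_mat ?A * ?A = ?D \<cdot>\<^sub>m 1\<^sub>m d" "adj_mat ?A \<in> carrier_mat d d" using adj_mat[OF Ac] by auto
  show ?thesis
  proof (intro exI allI impI)
    fix i k assume i: "i < d" and k: "k < d"
    have "(adj_mat ?A * ?A) $$ (i,k) = (\<Sum>l<d. adj_mat ?A $$ (i,l) * A l k)"
      using adj(2) i k by (auto simp: scalar_prod_def atLeast0LessThan intro!: sum.cong)
    then have "(\<Sum>l<d. adj_mat ?A $$ (i,l) * A l k) = ?D * (if i = k then 1 else 0)"
      using adj(1) i k by simp
    then show "(\<Sum>l<d. adj_mat ?A $$ (i,l) / ?D * A l k) = (if i = k then 1 else 0)"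
      using D by (simp add: sum_divide_distrib[symmetric])
  qed
qed


definition Pf :: "nat \<Rightarrow> (nat \<Rightarrow> nat \<Rightarrow> real) \<Rightarrow> real" where
  "Pf m G = (\<Sum>p | p permutes {..<2*m}. of_int (sign p) * (\<Prod>i<m. G (p (2*i)) (p (2*i+1))))"

lemma prod_pairs: "(\<Prod>x<2*(m::nat). f x) = (\<Prod>i<m. f (2*i) * f (2*i+1))"
  by (induction m) (auto simp: mult_ac)

lemma Pf_mult:
  "Pf m (\<lambda>a b. \<Sum>k<2*m. \<Sum>l<2*m. M a k * M b l * G k l) = ldet (2*m) M * Pf m G"
proof -
  define d where "d = 2*m"
  let ?D = "{..<d}"
  let ?P = "{p. p permutes ?D}"
  let ?Q = "PiE {..<m} (\<lambda>_. ?D \<times> ?D)"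
  define gq where "gq q x = (if even x then fst (q (x div 2)) else snd (q (x div 2)))"
    for q :: "nat \<Rightarrow> nat \<times> nat" and x
  define Gq where "Gq q = (\<Prod>i<m. G (fst (q i)) (snd (q i)))" for q :: "nat \<Rightarrow> nat \<times> nat"
  define K where "K g = (\<Sum>\<sigma>\<in>?P. of_int (sign \<sigma>) * (\<Prod>x<d. M (\<sigma> x) (g x)))" for g
  define tau where "tau q = (\<lambda>x. if x < d then gq q x else x)" for q
  define Qi where "Qi = {q\<in>?Q. inj_on (gq q) ?D}"
  have step1: "(\<Prod>i<m. \<Sum>k<d. \<Sum>l<d. M (\<sigma> (2*i)) k * M (\<sigma> (2*i+1)) l * G k l)
      = (\<Sum>q\<in>?Q. (\<Prod>x<d. M (\<sigma> x) (gq q x)) * Gq q)" for \<sigma>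
  proof -
    have "(\<Prod>i<m. \<Sum>k<d. \<Sum>l<d. M (\<sigma> (2*i)) k * M (\<sigma> (2*i+1)) l * G k l)
       = (\<Prod>i<m. \<Sum>kl\<in>?D\<times>?D. M (\<sigma> (2*i)) (fst kl) * M (\<sigma> (2*i+1)) (snd kl) * G (fst kl) (snd kl))"
      by (simp add: sum.cartesian_product split_def)
    also have "\<dots> = (\<Sum>q\<in>?Q. \<Prod>i<m. M (\<sigma> (2*i)) (fst (q i)) * M (\<sigma> (2*i+1)) (snd (q i)) * G (fst (q i)) (snd (q i)))"
      by (rule prod_sum_PiE) auto
    also have "\<dots> = (\<Sum>q\<in>?Q. (\<Prod>x<d. M (\<sigma> x) (gq q x)) * Gq q)"
    proof (rule sum.cong)
      fix q
      have "(\<Prod>x<d. M (\<sigma> x) (gq q x)) = (\<Prod>i<m. M (\<sigma> (2*i)) (gq q (2*i)) * M (\<sigma> (2*i+1)) (gq q (2*i+1)))"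
        unfolding d_def by (rule prod_pairs)
      also have "\<dots> = (\<Prod>i<m. M (\<sigma> (2*i)) (fst (q i)) * M (\<sigma> (2*i+1)) (snd (q i)))"
        unfolding gq_def by simp
      finally show "(\<Prod>i<m. M (\<sigma> (2*i)) (fst (q i)) * M (\<sigma> (2*i+1)) (snd (q i)) * G (fst (q i)) (snd (q i)))
          = (\<Prod>x<d. M (\<sigma> x) (gq q x)) * Gq q"
        unfolding Gq_def by (simp add: prod.distrib)
    qed simp
    finally show ?thesis .
  qed
  have "Pf m (\<lambda>a b. \<Sum>k<2*m. \<Sum>l<2*m. M a k * M b l * G k l)
      = (\<Sum>\<sigma>\<in>?P. of_int (sign \<sigma>) * (\<Sum>q\<in>?Q. (\<Prod>x<d. M (\<sigma> x) (gq q x)) * Gq q))"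
    unfolding Pf_def d_def[symmetric] using step1 by simp
  also have "\<dots> = (\<Sum>\<sigma>\<in>?P. \<Sum>q\<in>?Q. Gq q * (of_int (sign \<sigma>) * (\<Prod>x<d. M (\<sigma> x) (gq q x))))"
    by (simp add: sum_distrib_left mult_ac)
  also have "\<dots> = (\<Sum>q\<in>?Q. \<Sum>\<sigma>\<in>?P. Gq q * (of_int (sign \<sigma>) * (\<Prod>x<d. M (\<sigma> x) (gq q x))))"
    by (rule sum.swap)
  also have "\<dots> = (\<Sum>q\<in>?Q. Gq q * K (gq q))"
    unfolding K_def by (simp add: sum_distrib_left)
  finally have E1: "Pf m (\<lambda>a b. \<Sum>k<2*m. \<Sum>l<2*m. M a k * M b l * G k l) = (\<Sum>q\<in>?Q. Gq q * K (gq q))" .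
  have Kdet: "K g = Determinant.det (Matrix.mat d d (\<lambda>(i,j). M j (g i)))" for g
    unfolding K_def Determinant.det_def
    by (auto simp: atLeast0LessThan permutes_in_image intro!: sum.cong prod.cong)
  have K0: "K g = 0" if ni: "\<not> inj_on g ?D" for g
  proof -
    obtain i j where ij: "i \<in> ?D" "j \<in> ?D" "g i = g j" "i \<noteq> j" using ni unfolding inj_on_def lessThan_iff by blast
    show ?thesis unfolding Kdet
      by (rule det_identical_rows[of _ d i j]) (use ij in \<open>auto intro!: eq_vecI\<close>)
  qed
  have gqD: "gq q x \<in> ?D" if "q \<in> ?Q" "x < d" for q x
  proof -
    have "x div 2 < m" using that(2) d_def by simp
    then have "q (x div 2) \<in> ?D \<times> ?D" using that(1) by auto
    then show ?thesis unfolding gq_def by auto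
  qed
  have tauP: "tau q permutes ?D" if "q \<in> Qi" for q
  proof -
    have "tau q permutes {0..<d}"
    proof (rule inj_on_nat_permutes)
      show "inj_on (tau q) {0..<d}" using that unfolding Qi_def tau_def inj_on_def by auto
      show "tau q \<in> {0..<d} \<rightarrow> {0..<d}" using that gqD unfolding Qi_def tau_def by auto
    qed (auto simp: tau_def)
    then show ?thesis by (simp add: atLeast0LessThan)
  qed
  have K1: "K (gq q) = of_int (sign (tau q)) * ldet d M" if "q \<in> Qi" for q
  proof -
    let ?MT = "transpose_mat (Matrix.mat d d (\<lambda>(i,j). M i j))"
    have "Matrix.mat d d (\<lambda>(i,j). M j (gq q i)) = Matrix.mat d d (\<lambda>(i,j). ?MT $$ (tau q i, j))"
      using that gqD unfolding Qi_def tau_def by (auto intro!: eq_matI)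
    then have "K (gq q) = of_int (sign (tau q)) * Determinant.det ?MT"
      unfolding Kdet using det_permute_rows[of ?MT d "tau q"] tauP[OF that]
      by (simp add: atLeast0LessThan)
    also have "Determinant.det ?MT = ldet d M"
      unfolding ldet_JNF by (rule det_transpose[of _ d]) simp
    finally show ?thesis .
  qed
  have "(\<Sum>q\<in>?Q. Gq q * K (gq q)) = (\<Sum>q\<in>Qi. Gq q * K (gq q))"
    by (rule sum.mono_neutral_right) (auto simp: Qi_def K0 finite_PiE)
  also have "\<dots> = (\<Sum>q\<in>Qi. Gq q * of_int (sign (tau q))) * ldet d M"
    by (simp add: K1 sum_distrib_left sum_distrib_right mult_ac)
  also have "(\<Sum>q\<in>Qi. Gq q * of_int (sign (tau q))) = Pf m G"
    unfolding Pf_def d_def[symmetric]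
  proof (rule sum.reindex_bij_witness[where i="\<lambda>\<tau>. (\<lambda>i\<in>{..<m}. (\<tau> (2*i), \<tau> (2*i+1)))" and j=tau])
    fix q assume q: "q \<in> Qi"
    show "tau q \<in> ?P" using tauP[OF q] by simp
    show "(\<lambda>i\<in>{..<m}. (tau q (2*i), tau q (2*i+1))) = q"
    proof
      fix i show "(\<lambda>i\<in>{..<m}. (tau q (2*i), tau q (2*i+1))) i = q i"
        using q unfolding Qi_def tau_def gq_def d_def by (auto simp: PiE_def extensional_def)
    qed
    show "of_int (sign (tau q)) * (\<Prod>i<m. G (tau q (2 * i)) (tau q (2 * i + 1))) = Gq q * of_int (sign (tau q))"
      unfolding Gq_def tau_def gq_def d_def by (auto intro!: prod.cong)
  next
    fix \<tau> assume t: "\<tau> \<in> ?P"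
    then have tp: "\<tau> permutes ?D" by simp
    have tD: "\<tau> x \<in> ?D" if "x < d" for x using permutes_in_image[OF tp] that by auto
    have gqt: "gq (\<lambda>i\<in>{..<m}. (\<tau> (2*i), \<tau> (2*i+1))) x = \<tau> x" if "x < d" for x
    proof -
      have "x div 2 < m" using that d_def by simp
      then show ?thesis unfolding gq_def
        by (auto simp: elim!: evenE oddE)
    qed
    show "tau (\<lambda>i\<in>{..<m}. (\<tau> (2*i), \<tau> (2*i+1))) = \<tau>"
    proof
      fix x show "tau (\<lambda>i\<in>{..<m}. (\<tau> (2*i), \<tau> (2*i+1))) x = \<tau> x"
        using gqt permutes_not_in[OF tp] unfolding tau_def by auto
    qed
    have "(\<lambda>i\<in>{..<m}. (\<tau> (2*i), \<tau> (2*i+1))) \<in> ?Q"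
      using tD d_def by auto
    moreover have "inj_on (gq (\<lambda>i\<in>{..<m}. (\<tau> (2*i), \<tau> (2*i+1)))) ?D"
      using gqt permutes_inj[OF tp] unfolding inj_on_def inj_def by auto
    ultimately show "(\<lambda>i\<in>{..<m}. (\<tau> (2*i), \<tau> (2*i+1))) \<in> Qi"
      unfolding Qi_def by blast
  qed
  finally show ?thesis using E1 d_def by simp
qed


definition Jm :: "nat \<Rightarrow> nat \<Rightarrow> real" where
  "Jm a b = (if even a \<and> b = Suc a then 1 else if even b \<and> a = Suc b then -1 else 0)"

lemma Jm_alt: "Jm a b = (if a div 2 = b div 2 \<and> a \<noteq> b then (if even a then 1 else -1) else 0)"
  unfolding Jm_def by (auto elim!: evenE oddE; presburger)

lemma permutes_shrink:
  assumes "p permutes {..<Suc (Suc k)}" "p k = k" "p (Suc k) = Suc k"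
  shows "p permutes {..<k}"
  using assms unfolding permutes_def
  by (metis lessThan_iff less_SucE)

lemma Jm_term_nonneg:
  "p permutes {..<2*m} \<Longrightarrow> 0 \<le> of_int (sign p) * (\<Prod>i<m. Jm (p (2*i)) (p (2*i+1)))"
proof (induction m arbitrary: p)
  case 0
  then show ?case by (simp add: sign_id)
next
  case (Suc m)
  let ?S = "{..<2 * Suc m}"
  let ?t = "\<lambda>p. of_int (sign p) * (\<Prod>i<Suc m. Jm (p (2*i)) (p (2*i+1)))"
  have pS: "p permutes ?S" by fact
  show ?case
  proof (cases "(\<Prod>i<Suc m. Jm (p (2*i)) (p (2*i+1))) = 0")
    case True then show ?thesis by (metis mult_zero_right order_refl)
  next
    case False
    then have nz: "\<And>i. i < Suc m \<Longrightarrow> Jm (p (2*i)) (p (2*i+1)) \<noteq> 0"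
      using prod_zero_iff[of "{..<Suc m}" "\<lambda>i. Jm (p (2*i)) (p (2*i+1))"] by auto
    define b where "b = p (2*m) div 2"
    have b: "b \<le> m" using permutes_in_image[OF pS, of "2*m"] unfolding b_def by auto
    define \<beta> where "\<beta> = (if b = m then id else Transposition.transpose (2*b) (2*m) \<circ> Transposition.transpose (2*b+1) (2*m+1))"
    have \<beta>div: "\<beta> x div 2 = (if x div 2 = b then m else if x div 2 = m then b else x div 2)" for x
      unfolding \<beta>_def Transposition.transpose_def using b by auto
    have \<beta>ev: "even (\<beta> x) = even x" for x
      unfolding \<beta>_def Transposition.transpose_def by auto
    have \<beta>S: "\<beta> permutes ?S"
      unfolding \<beta>_def using b
      by (auto intro!: permutes_compose permutes_swap_id)
    have \<beta>sign: "sign \<beta> = 1"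
      unfolding \<beta>_def using b
      by (auto simp: sign_compose permutation_swap_id sign_swap_id sign_id)
    have \<beta>inj: "inj \<beta>" using permutes_inj[OF \<beta>S] .
    have \<beta>J: "Jm (\<beta> x) (\<beta> y) = Jm x y" for x y
    proof -
      have "(\<beta> x div 2 = \<beta> y div 2) = (x div 2 = y div 2)" unfolding \<beta>div by auto
      moreover have "(\<beta> x = \<beta> y) = (x = y)" using \<beta>inj by (auto dest: injD)
      ultimately show ?thesis unfolding Jm_alt \<beta>ev by simp
    qed
    define p1 where "p1 = \<beta> \<circ> p"
    have p1S: "p1 permutes ?S" unfolding p1_def by (rule permutes_compose[OF pS \<beta>S])
    have t1: "?t p1 = ?t p"
    proof -
      have "sign p1 = sign p" unfolding p1_def
        using \<beta>sign permutation_permutes pS \<beta>S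
        by (metis finite_lessThan mult_1 sign_compose)
      moreover have "(\<Prod>i<Suc m. Jm (p1 (2*i)) (p1 (2*i+1))) = (\<Prod>i<Suc m. Jm (p (2*i)) (p (2*i+1)))"
        unfolding p1_def by (simp add: \<beta>J)
      ultimately show ?thesis by simp
    qed
    have nz1: "Jm (p1 (2*m)) (p1 (2*m+1)) \<noteq> 0" using nz[of m] unfolding p1_def by (simp add: \<beta>J)
    have p1m: "p1 (2*m) div 2 = m" unfolding p1_def using \<beta>div[of "p (2*m)"] b_def by auto
    have p1m': "p1 (2*m+1) div 2 = m" "p1 (2*m+1) \<noteq> p1 (2*m)"
      using nz1 p1m unfolding Jm_alt by (auto split: if_splits)
    have cases: "(p1 (2*m) = 2*m \<and> p1 (2*m+1) = 2*m+1) \<or> (p1 (2*m) = 2*m+1 \<and> p1 (2*m+1) = 2*m)"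
      using p1m p1m' by presburger
    obtain p2 where p2S: "p2 permutes ?S" and p2a: "p2 (2*m) = 2*m" and p2b: "p2 (2*m+1) = 2*m+1"
      and t2: "?t p2 = ?t p1"
    proof (cases "p1 (2*m) = 2*m")
      case True
      then show ?thesis using that[of p1] cases p1S by auto
    next
      case False
      then have c: "p1 (2*m) = 2*m+1" "p1 (2*m+1) = 2*m" using cases by auto
      define p2 where "p2 = Transposition.transpose (2*m) (2*m+1) \<circ> p1"
      have p2S: "p2 permutes ?S" unfolding p2_def
        by (rule permutes_compose[OF p1S]) (auto intro!: permutes_swap_id)
      have pp1: "permutation p1" using p1S by (metis finite_lessThan permutation_permutes)
      have sg: "sign p2 = - sign p1" unfolding p2_def
        using sign_compose[OF permutation_swap_id pp1] by (simp add: sign_swap_id)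
      have other: "p1 (2*i) \<notin> {2*m, 2*m+1} \<and> p1 (2*i+1) \<notin> {2*m, 2*m+1}" if "i < m" for i
      proof -
        have ij: "inj p1" using permutes_inj[OF p1S] .
        have "p1 (2*i) \<noteq> p1 (2*m)" "p1 (2*i) \<noteq> p1 (2*m+1)" "p1 (2*i+1) \<noteq> p1 (2*m)" "p1 (2*i+1) \<noteq> p1 (2*m+1)"
          using that by (simp_all add: inj_eq[OF ij])
        then show ?thesis unfolding c by simp
      qed
      have "(\<Prod>i<Suc m. Jm (p2 (2*i)) (p2 (2*i+1))) = (\<Prod>i<m. Jm (p1 (2*i)) (p1 (2*i+1))) * Jm (2*m) (2*m+1)"
        unfolding p2_def using other c by (simp add: Transposition.transpose_def)
      also have "\<dots> = - ((\<Prod>i<m. Jm (p1 (2*i)) (p1 (2*i+1))) * Jm (2*m+1) (2*m))"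
        by (simp add: Jm_def)
      also have "\<dots> = - (\<Prod>i<Suc m. Jm (p1 (2*i)) (p1 (2*i+1)))"
        using c by simp
      finally have "?t p2 = ?t p1" using sg by simp
      moreover have "p2 (2*m) = 2*m" "p2 (2*m+1) = 2*m+1" unfolding p2_def using c by auto
      ultimately show ?thesis using that p2S by blast
    qed
    have p2S': "p2 permutes {..<2*m}"
      using permutes_shrink[of p2 "2*m"] p2S p2a p2b by simp
    have e: "?t p2 = of_int (sign p2) * (\<Prod>i<m. Jm (p2 (2*i)) (p2 (2*i+1)))"
      using p2a p2b by (simp add: Jm_def)
    from e Suc.IH[OF p2S'] have "0 \<le> ?t p2" by (simp only:)
    then show ?thesis using t1 t2 by simp
  qed
qed

lemma Pf_Jm_pos: "Pf m Jm > 0"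
proof -
  let ?P = "{p. p permutes {..<2*m}}"
  let ?f = "\<lambda>p. of_int (sign p) * (\<Prod>i<m. Jm (p (2*i)) (p (2*i+1)))"
  have "?f id \<le> sum ?f ?P"
  proof (rule member_le_sum)
    show "id \<in> ?P" by (simp add: permutes_id)
    show "\<And>x. x \<in> ?P - {id} \<Longrightarrow> 0 \<le> ?f x" using Jm_term_nonneg by blast
    show "finite ?P" by (simp add: finite_permutations)
  qed
  moreover have "?f id = 1" by (simp add: sign_id Jm_def)
  ultimately show ?thesis unfolding Pf_def by simp
qed


lemma flag_basis_exists:
  fixes F :: "nat \<Rightarrow> 'v::euclidean_space set"
  assumes dim: "DIM('v) = 2*n" and fl: "full_flag n F"
  shows "\<exists>e::nat\<Rightarrow>'v. \<forall>a<2*n. e a \<in> F (Suc a) \<and> (\<forall>x\<in>F a. e a \<bullet> x = 0) \<and> e a \<bullet> e a = 1"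
proof -
  have "\<exists>x::'v. x \<in> F (Suc a) \<and> (\<forall>y\<in>F a. x \<bullet> y = 0) \<and> x \<bullet> x = 1" if a: "a < 2*n" for a
  proof -
    have sa: "subspace (F a)" "dim (F a) = a" "subspace (F (Suc a))" "dim (F (Suc a)) = Suc a" "F a \<subseteq> F (Suc a)"
      using fl a unfolding full_flag_def by auto
    have ne: "F a \<noteq> F (Suc a)" using sa by auto
    have "span (F a) \<subset> span (F (Suc a))"
      using sa ne by (simp add: span_eq_iff[THEN iffD2] psubset_eq)
    then obtain x where x: "x \<noteq> 0" "x \<in> span (F (Suc a))" "\<And>y. y \<in> span (F a) \<Longrightarrow> real_inner_class.orthogonal x y"
      by (meson orthogonal_to_subspace_exists_gen)
    have xF: "x \<in> F (Suc a)" using x(2) sa by (simp add: span_eq_iff[THEN iffD2])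
    have xo: "\<forall>y\<in>F a. x \<bullet> y = 0" using x(3) span_superset unfolding real_inner_class.orthogonal_def by blast
    show ?thesis
    proof (intro exI conjI)
      show "sgn x \<in> F (Suc a)" using xF sa by (simp add: sgn_div_norm subspace_scale)
      show "\<forall>y\<in>F a. sgn x \<bullet> y = 0" using xo by (simp add: sgn_div_norm)
      show "sgn x \<bullet> sgn x = 1" using x(1) by (simp add: power2_norm_eq_inner[symmetric] norm_sgn)
    qed
  qed
  then show ?thesis by metis
qed

locale flagctx =
  fixes n :: nat and F :: "nat \<Rightarrow> 'v::euclidean_space set" and e :: "nat \<Rightarrow> 'v"
  assumes dimV: "DIM('v) = 2*n" and flag: "full_flag n F"
    and e_in: "\<And>a. a < 2*n \<Longrightarrow> e a \<in> F (Suc a)"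
    and e_orth: "\<And>a x. a < 2*n \<Longrightarrow> x \<in> F a \<Longrightarrow> e a \<bullet> x = 0"
    and e_unit: "\<And>a. a < 2*n \<Longrightarrow> e a \<bullet> e a = 1"
begin

lemma F_sub: "j \<le> 2*n \<Longrightarrow> subspace (F j)"
  using flag unfolding full_flag_def by auto

lemma F_dim: "j \<le> 2*n \<Longrightarrow> dim (F j) = j"
  using flag unfolding full_flag_def by auto

lemma F_0: "F 0 = {0}"
  using flag unfolding full_flag_def by auto

lemma F_mono: "i \<le> j \<Longrightarrow> j \<le> 2*n \<Longrightarrow> F i \<subseteq> F j"
proof (induction j rule: dec_induct)
  case base then show ?case by simp
next
  case (step k)
  then have "F k \<subseteq> F (Suc k)" using flag unfolding full_flag_def by auto
  with step show ?case by auto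
qed

lemma e_orthonormal: "a < 2*n \<Longrightarrow> b < 2*n \<Longrightarrow> e a \<bullet> e b = (if a = b then 1 else 0)"
proof -
  have *: "e a \<bullet> e b = 0" if "a < b" "b < 2*n" for a b
  proof -
    have "e a \<in> F b" using e_in[of a] F_mono[of "Suc a" b] that by auto
    then show ?thesis using e_orth[of b "e a"] that by (simp add: inner_commute)
  qed
  assume "a < 2*n" "b < 2*n"
  then show ?thesis using *[of a b] *[of b a] e_unit[of a]
    by (cases a b rule: linorder_cases) (auto simp: inner_commute)
qed

lemma e_inj: "inj_on e {..<2*n}"
proof
  fix a b assume "a \<in> {..<2*n}" "b \<in> {..<2*n}" "e a = e b"
  then show "a = b" using e_orthonormal[of a b] e_unit[of a] by (auto split: if_splits)
qed

lemma span_e: "span (e ` {..<2*n}) = UNIV"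
proof -
  let ?S = "e ` {..<2*n}"
  have "pairwise real_inner_class.orthogonal ?S"
    unfolding pairwise_def real_inner_class.orthogonal_def using e_orthonormal by fastforce
  moreover have "0 \<notin> ?S" using e_unit by fastforce
  ultimately have ind: "independent ?S" by (rule pairwise_orthogonal_independent)
  have "card ?S = 2*n" using card_image[OF e_inj] by simp
  then have "dim (span ?S) = DIM('v)" using dim_span_eq_card_independent[OF ind] dimV by simp
  then show ?thesis using dim_eq_full[of ?S] by simp
qed

lemma expand: "v = (\<Sum>b<2*n. (e b \<bullet> v) *\<^sub>R e b)"
proof -
  define w where "w = v - (\<Sum>b<2*n. (e b \<bullet> v) *\<^sub>R e b)"
  have wc: "e c \<bullet> w = 0" if "c < 2*n" for c
  proof -
    have "e c \<bullet> (\<Sum>b<2*n. (e b \<bullet> v) *\<^sub>R e b) = (\<Sum>b<2*n. (e b \<bullet> v) * (if c = b then 1 else 0))"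
      using that by (simp add: inner_sum_right e_orthonormal)
    also have "\<dots> = e c \<bullet> v" using that by (simp add: if_distrib cong: if_cong)
    finally show ?thesis unfolding w_def by (simp add: inner_diff_right)
  qed
  have wc': "w \<bullet> e c = 0" if "c < 2*n" for c using wc[OF that] by (simp add: inner_commute)
  have "real_inner_class.orthogonal w w"
    by (rule orthogonal_to_span[of w "e ` {..<2*n}"]) (auto simp: span_e real_inner_class.orthogonal_def wc')
  then show ?thesis unfolding w_def by (simp add: orthogonal_self)
qed

lemma F_char: "j \<le> 2*n \<Longrightarrow> F j = {v. \<forall>b. j \<le> b \<longrightarrow> b < 2*n \<longrightarrow> e b \<bullet> v = 0}"
proof (intro equalityI subsetI CollectI allI impI)
  fix v b assume j: "j \<le> 2*n" and v: "v \<in> F j" and b: "j \<le> b" "b < 2*n"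
  then have "v \<in> F b" using F_mono[of j b] by auto
  then show "e b \<bullet> v = 0" using e_orth b by simp
next
  fix v assume j: "j \<le> 2*n" and v: "v \<in> {v. \<forall>b. j \<le> b \<longrightarrow> b < 2*n \<longrightarrow> e b \<bullet> v = 0}"
  have "v = (\<Sum>b<2*n. (e b \<bullet> v) *\<^sub>R e b)" by (rule expand)
  also have "\<dots> = (\<Sum>b<j. (e b \<bullet> v) *\<^sub>R e b)"
    using v j by (intro sum.mono_neutral_right) auto
  also have "\<dots> \<in> F j"
  proof (rule subspace_sum[OF F_sub[OF j]])
    fix b assume "b \<in> {..<j}"
    then have "e b \<in> F j" using e_in[of b] F_mono[of "Suc b" j] j by auto
    then show "(e b \<bullet> v) *\<^sub>R e b \<in> F j" using F_sub[OF j] by (simp add: subspace_scale)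
  qed
  finally show "v \<in> F j" .
qed

lemma bil_left:
  assumes "bilinear \<omega>"
  shows "\<omega> u v = (\<Sum>b<2*n. (e b \<bullet> u) * \<omega> (e b) v)"
proof -
  interpret l: linear "\<lambda>x. \<omega> x v" using assms by (simp add: bilinear_def)
  have "\<omega> u v = \<omega> (\<Sum>b<2*n. (e b \<bullet> u) *\<^sub>R e b) v" using expand[of u] by simp
  also have "\<dots> = (\<Sum>b<2*n. (e b \<bullet> u) * \<omega> (e b) v)" by (simp add: l.sum l.scale)
  finally show ?thesis .
qed

lemma bil_right:
  assumes "bilinear \<omega>"
  shows "\<omega> u v = (\<Sum>b<2*n. (e b \<bullet> v) * \<omega> u (e b))"
proof -
  interpret r: linear "\<lambda>x. \<omega> u x" using assms by (simp add: bilinear_def)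
  have "\<omega> u v = \<omega> u (\<Sum>b<2*n. (e b \<bullet> v) *\<^sub>R e b)" using expand[of v] by simp
  also have "\<dots> = (\<Sum>b<2*n. (e b \<bullet> v) * \<omega> u (e b))" by (simp add: r.sum r.scale)
  finally show ?thesis .
qed

lemma antisym:
  assumes "bilinear \<omega>" "\<forall>v. \<omega> v v = 0"
  shows "\<omega> u v = - \<omega> v u"
proof -
  have "\<omega> (u+v) (u+v) = \<omega> u u + \<omega> u v + (\<omega> v u + \<omega> v v)"
    using bilinear_ladd[OF assms(1)] bilinear_radd[OF assms(1)] by simp
  then show ?thesis using assms(2) by (simp add: eq_neg_iff_add_eq_0)
qed

end


lemma sum_single: "finite A \<Longrightarrow> t \<in> A \<Longrightarrow> (\<And>b. b \<in> A \<Longrightarrow> b \<noteq> t \<Longrightarrow> f b = 0) \<Longrightarrow> sum f A = f t"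
  by (subst sum.remove[of A t]) (auto intro!: sum.neutral)

context flagctx
begin

definition Patt :: "('v \<Rightarrow> 'v \<Rightarrow> real) \<Rightarrow> bool" where
  "Patt \<omega> \<longleftrightarrow> bilinear \<omega> \<and> (\<forall>v. \<omega> v v = 0)
     \<and> (\<forall>a b. a < 2*n \<longrightarrow> b < 2*n \<longrightarrow> a + b < 2*n - 1 \<longrightarrow> \<omega> (e a) (e b) = 0)
     \<and> (\<forall>a<n. \<omega> (e a) (e (2*n - 1 - a)) \<noteq> 0)"

lemma PattD:
  assumes "Patt \<omega>"
  shows "bilinear \<omega>" "\<And>v. \<omega> v v = 0"
    "\<And>a b. a < 2*n \<Longrightarrow> b < 2*n \<Longrightarrow> a + b < 2*n - 1 \<Longrightarrow> \<omega> (e a) (e b) = 0"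
    "\<And>a. a < n \<Longrightarrow> \<omega> (e a) (e (2*n - 1 - a)) \<noteq> 0"
  using assms unfolding Patt_def by blast+

lemma Patt_Dnz:
  assumes P: "Patt \<omega>" and t: "t < 2*n"
  shows "\<omega> (e t) (e (2*n - 1 - t)) \<noteq> 0"
proof (cases "t < n")
  case True then show ?thesis using PattD(4)[OF P] by blast
next
  case False
  define s where "s = 2*n - 1 - t"
  have s: "s < n" "2*n - 1 - s = t" using False t unfolding s_def by auto
  have bil: "bilinear \<omega>" and alt: "\<forall>v. \<omega> v v = 0"
    using PattD(1,2)[OF P] by blast+
  have "\<omega> (e s) (e t) \<noteq> 0" using PattD(4)[OF P, of s] s by simp
  moreover have "\<omega> (e t) (e s) = - \<omega> (e s) (e t)" by (rule antisym[OF bil alt])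
  ultimately show ?thesis unfolding s_def by simp
qed

lemma Patt_top:
  assumes P: "Patt \<omega>" and v: "v \<noteq> 0"
  shows "\<exists>t<2*n. (\<forall>b. t < b \<longrightarrow> b < 2*n \<longrightarrow> e b \<bullet> v = 0) \<and> e t \<bullet> v \<noteq> 0
            \<and> \<omega> v (e (2*n - 1 - t)) \<noteq> 0"
proof -
  define B where "B = {b. b < 2*n \<and> e b \<bullet> v \<noteq> 0}"
  have fB: "finite B" unfolding B_def by simp
  have neB: "B \<noteq> {}"
  proof
    assume "B = {}"
    then have "\<forall>b<2*n. e b \<bullet> v = 0" unfolding B_def by auto
    then have "v = 0" using expand[of v] by simp
    with v show False by simp
  qed
  define t where "t = Max B"
  have tB: "t \<in> B" unfolding t_def using fB neB by (rule Max_in)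
  then have t: "t < 2*n" "e t \<bullet> v \<noteq> 0" unfolding B_def by auto
  have above: "\<forall>b. t < b \<longrightarrow> b < 2*n \<longrightarrow> e b \<bullet> v = 0"
  proof (intro allI impI)
    fix b assume "t < b" "b < 2*n"
    then show "e b \<bullet> v = 0"
    proof (rule_tac ccontr)
      assume tb: "t < b" "b < 2*n" and nb: "e b \<bullet> v \<noteq> 0"
      then have "b \<in> B" unfolding B_def by simp
      then have "b \<le> t" unfolding t_def using fB by (simp add: Max_ge)
      with tb show False by simp
    qed
  qed
  define s where "s = 2*n - 1 - t"
  have bil: "bilinear \<omega>" using PattD(1)[OF P] .
  have "\<omega> v (e s) = (\<Sum>b<2*n. (e b \<bullet> v) * \<omega> (e b) (e s))" by (rule bil_left[OF bil])
  also have "\<dots> = (e t \<bullet> v) * \<omega> (e t) (e s)"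
  proof (rule sum_single)
    fix b assume b: "b \<in> {..<2*n}" "b \<noteq> t"
    show "(e b \<bullet> v) * \<omega> (e b) (e s) = 0"
    proof (cases "t < b")
      case True then show ?thesis using above b by auto
    next
      case False
      then have "b + s < 2*n - 1" "s < 2*n" using b t unfolding s_def by auto
      then have "\<omega> (e b) (e s) = 0" using PattD(3)[OF P, of b s] b by simp
      then show ?thesis by simp
    qed
  qed (use t in auto)
  finally have "\<omega> v (e s) = (e t \<bullet> v) * \<omega> (e t) (e s)" .
  moreover have "\<omega> (e t) (e s) \<noteq> 0" using Patt_Dnz[OF P t(1)] unfolding s_def .
  ultimately show ?thesis using t above unfolding s_def by auto
qed

lemma Patt_nondeg:
  assumes P: "Patt \<omega>" and v: "\<forall>w. \<omega> v w = 0"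
  shows "v = 0"
  using Patt_top[OF P] v by blast

lemma Patt_sorth:
  assumes P: "Patt \<omega>" and j: "j \<le> 2*n"
  shows "sorth \<omega> (F j) = F (2*n - j)"
proof (intro equalityI subsetI)
  fix v assume v: "v \<in> sorth \<omega> (F j)"
  show "v \<in> F (2*n - j)"
  proof (rule ccontr)
    assume nv: "v \<notin> F (2*n - j)"
    then obtain b where b: "2*n - j \<le> b" "b < 2*n" "e b \<bullet> v \<noteq> 0"
      using F_char[of "2*n - j"] by auto
    have "v \<noteq> 0" using b by auto
    then obtain t where t: "t < 2*n" "\<forall>b. t < b \<longrightarrow> b < 2*n \<longrightarrow> e b \<bullet> v = 0"
      "\<omega> v (e (2*n - 1 - t)) \<noteq> 0"
      using Patt_top[OF P] by blast
    have "b \<le> t" using t(2) b by (meson not_le)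
    then have "Suc (2*n - 1 - t) \<le> j" using b t j by auto
    then have "e (2*n - 1 - t) \<in> F j" using e_in[of "2*n - 1 - t"] F_mono[of "Suc (2*n - 1 - t)" j] j t by auto
    then have "\<omega> v (e (2*n - 1 - t)) = 0" using v unfolding sorth_def by auto
    with t show False by simp
  qed
next
  fix v assume v: "v \<in> F (2*n - j)"
  have bil: "bilinear \<omega>" using PattD(1)[OF P] .
  show "v \<in> sorth \<omega> (F j)"
    unfolding sorth_def
  proof (intro CollectI ballI)
    fix w assume w: "w \<in> F j"
    have "\<omega> v w = (\<Sum>a<2*n. (e a \<bullet> v) * \<omega> (e a) w)" by (rule bil_left[OF bil])
    also have "\<dots> = (\<Sum>a<2*n. (e a \<bullet> v) * (\<Sum>b<2*n. (e b \<bullet> w) * \<omega> (e a) (e b)))"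
    proof -
      have r: "\<And>a. \<omega> (e a) w = (\<Sum>b<2*n. (e b \<bullet> w) * \<omega> (e a) (e b))" by (rule bil_right[OF bil])
      show ?thesis by (simp only: r)
    qed
    also have "\<dots> = 0"
    proof (intro sum.neutral ballI)
      fix a assume a: "a \<in> {..<2*n}"
      show "(e a \<bullet> v) * (\<Sum>b<2*n. (e b \<bullet> w) * \<omega> (e a) (e b)) = 0"
      proof (cases "2*n - j \<le> a")
        case True then have "e a \<bullet> v = 0" using v F_char[of "2*n - j"] a by auto
        then show ?thesis by simp
      next
        case False
        have "(\<Sum>b<2*n. (e b \<bullet> w) * \<omega> (e a) (e b)) = 0"
        proof (intro sum.neutral ballI)
          fix b assume b: "b \<in> {..<2*n}"
          show "(e b \<bullet> w) * \<omega> (e a) (e b) = 0"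
          proof (cases "j \<le> b")
            case True then have "e b \<bullet> w = 0" using w F_char[OF j] b by auto
            then show ?thesis by simp
          next
            case False
            with \<open>\<not> 2*n - j \<le> a\<close> have "a + b < 2*n - 1" by auto
            then have "\<omega> (e a) (e b) = 0" using PattD(3)[OF P, of a b] a b by simp
            then show ?thesis by simp
          qed
        qed
        then show ?thesis by simp
      qed
    qed
    finally show "\<omega> v w = 0" .
  qed
qed

lemma Patt_Omega:
  assumes P: "Patt \<omega>"
  shows "\<omega> \<in> OmegaF n F"
proof -
  have sf: "symplectic_form \<omega>"
    unfolding symplectic_form_def using PattD(1,2)[OF P] Patt_nondeg[OF P] by blast
  have iso: "isotropic \<omega> (F j)" if "j \<le> n" for j
    unfolding isotropic_def using Patt_sorth[OF P, of j] F_mono[of j "2*n - j"] that by auto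
  have coiso: "coisotropic \<omega> (F j)" if "n \<le> j" "j \<le> 2*n" for j
    unfolding coisotropic_def using Patt_sorth[OF P, of j] F_mono[of "2*n - j" j] that by auto
  show ?thesis unfolding OmegaF_def using sf iso coiso Patt_sorth[OF P] by auto
qed

lemma Omega_Patt:
  assumes O: "\<omega> \<in> OmegaF n F"
  shows "Patt \<omega>"
proof -
  have sf: "symplectic_form \<omega>" and so: "\<And>j. j \<le> n \<Longrightarrow> sorth \<omega> (F j) = F (2*n - j)"
    using O unfolding OmegaF_def by auto
  have bil: "bilinear \<omega>" and alt: "\<forall>v. \<omega> v v = 0" using sf unfolding symplectic_form_def by auto
  have zero1: "\<omega> (e b) (e a) = 0" if "a < n" "b < 2*n" "a + b < 2*n - 1" for a b
  proof -
    have "Suc b \<le> 2*n - Suc a" using that by presburger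
    then have "e b \<in> F (2*n - Suc a)" using e_in[of b] F_mono[of "Suc b" "2*n - Suc a"] that by auto
    then have "e b \<in> sorth \<omega> (F (Suc a))" using so[of "Suc a"] that by auto
    moreover have "e a \<in> F (Suc a)" using e_in[of a] that by auto
    ultimately show ?thesis unfolding sorth_def by auto
  qed
  have zero: "\<omega> (e a) (e b) = 0" if "a < 2*n" "b < 2*n" "a + b < 2*n - 1" for a b
  proof (cases "a < n")
    case True
    then have "\<omega> (e b) (e a) = 0" using zero1 that by auto
    then show ?thesis using antisym[OF bil alt, of "e a" "e b"] by simp
  next
    case False
    then have "b < n" using that by auto
    then show ?thesis using zero1[of b a] that by auto
  qed
  have nz: "\<omega> (e a) (e (2*n - 1 - a)) \<noteq> 0" if a: "a < n" for a
  proof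
    assume z: "\<omega> (e a) (e (2*n - 1 - a)) = 0"
    define s where "s = 2*n - 1 - a"
    have s: "s < 2*n" "Suc a \<le> n" using a unfolding s_def by auto
    have "e s \<in> sorth \<omega> (F (Suc a))"
      unfolding sorth_def
    proof (intro CollectI ballI)
      fix w assume w: "w \<in> F (Suc a)"
      have "\<omega> (e s) w = (\<Sum>c<2*n. (e c \<bullet> w) * \<omega> (e s) (e c))" by (rule bil_right[OF bil])
      also have "\<dots> = 0"
      proof (intro sum.neutral ballI)
        fix c assume c: "c \<in> {..<2*n}"
        show "(e c \<bullet> w) * \<omega> (e s) (e c) = 0"
        proof (cases "a < c")
          case True then have "e c \<bullet> w = 0" using w F_char[of "Suc a"] c a by auto
          then show ?thesis by simp
        next
          case False
          show ?thesis
          proof (cases "c = a")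
            case True
            have "\<omega> (e s) (e a) = 0" using antisym[OF bil alt, of "e s" "e a"] z unfolding s_def by simp
            then show ?thesis using True by simp
          next
            case False
            with \<open>\<not> a < c\<close> have "s + c < 2*n - 1" using a unfolding s_def by auto
            then show ?thesis using zero[of s c] s c by auto
          qed
        qed
      qed
      finally show "\<omega> (e s) w = 0" .
    qed
    then have "e s \<in> F s" using so[of "Suc a"] s unfolding s_def by auto
    then have "e s \<bullet> e s = 0" using e_orth s by auto
    with e_unit[OF s(1)] show False by simp
  qed
  show ?thesis unfolding Patt_def using bil alt zero nz by blast
qed

lemma Omega_eq: "OmegaF n F = {\<omega>. Patt \<omega>}"
  using Patt_Omega Omega_Patt by blast

end


definition comb :: "real \<Rightarrow> ('v \<Rightarrow> 'v \<Rightarrow> real) \<Rightarrow> ('v \<Rightarrow> 'v \<Rightarrow> real) \<Rightarrow> ('v \<Rightarrow> 'v \<Rightarrow> real)" where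
  "comb t x y = (\<lambda>u v. t * x u v + (1 - t) * y u v)"

lemma conv_pos:
  fixes p q t :: real
  assumes "0 < p" "0 < q" "0 \<le> t" "t \<le> 1"
  shows "0 < t*p + (1-t)*q"
proof (cases "t = 0")
  case True then show ?thesis using assms by simp
next
  case False
  then have "0 < t*p" using assms by simp
  moreover have "0 \<le> (1-t)*q" using assms by simp
  ultimately show ?thesis by simp
qed

lemma conv_sign:
  fixes p q t :: real
  assumes "p \<noteq> 0" "q \<noteq> 0" "(0 < p) = (0 < q)" "0 \<le> t" "t \<le> 1"
  shows "t*p + (1-t)*q \<noteq> 0 \<and> (0 < t*p + (1-t)*q) = (0 < p)"
proof (cases "0 < p")
  case True
  then show ?thesis using conv_pos[of p q t] assms by auto
next
  case False
  then have "0 < -p" "0 < -q" using assms by auto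
  then have "0 < t*(-p) + (1-t)*(-q)" using conv_pos[of "-p" "-q" t] assms by blast
  then show ?thesis using False by auto
qed

lemma bilinear_comb:
  assumes "bilinear x" "bilinear y"
  shows "bilinear (comb t x y)"
  using assms unfolding bilinear_def linear_iff comb_def by (simp add: algebra_simps)

lemma eval_cont: "continuous_on S (\<lambda>\<omega>::'a::type\<Rightarrow>'b::type\<Rightarrow>real. \<omega> u v)"
  by (intro continuous_on_product_then_coordinatewise[where f="\<lambda>\<omega>. \<omega> u"]
      continuous_on_product_then_coordinatewise[where f="\<lambda>\<omega>. \<omega>"] continuous_on_id)

lemma comb_cont: "continuous_on S (\<lambda>t. comb t x y)"
  unfolding comb_def
  by (intro continuous_on_coordinatewise_then_product continuous_intros)

context flagctx
begin

definition sg :: "('v \<Rightarrow> 'v \<Rightarrow> real) \<Rightarrow> nat \<Rightarrow> bool" where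
  "sg \<omega> a = (0 < \<omega> (e a) (e (2*n - 1 - a)))"

definition Cls :: "('v \<Rightarrow> 'v \<Rightarrow> real) \<Rightarrow> ('v \<Rightarrow> 'v \<Rightarrow> real) set" where
  "Cls \<omega>0 = {\<omega>. Patt \<omega> \<and> (\<forall>a<n. sg \<omega> a = sg \<omega>0 a)}"

lemma Patt_comb:
  assumes x: "Patt x" and y: "Patt y" and s: "\<forall>a<n. sg x a = sg y a" and t: "0 \<le> t" "t \<le> 1"
  shows "Patt (comb t x y) \<and> (\<forall>a<n. sg (comb t x y) a = sg x a)"
proof -
  have D: "comb t x y (e a) (e (2*n - 1 - a)) \<noteq> 0 \<and> sg (comb t x y) a = sg x a" if a: "a < n" for a
  proof -
    have "x (e a) (e (2*n - 1 - a)) \<noteq> 0" "y (e a) (e (2*n - 1 - a)) \<noteq> 0"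
      using PattD(4)[OF x a] PattD(4)[OF y a] by auto
    moreover have "(0 < x (e a) (e (2*n - 1 - a))) = (0 < y (e a) (e (2*n - 1 - a)))"
      using s a unfolding sg_def by auto
    ultimately show ?thesis using conv_sign[OF _ _ _ t] unfolding sg_def comb_def by blast
  qed
  have "Patt (comb t x y)"
    unfolding Patt_def
  proof (intro conjI allI impI)
    show "bilinear (comb t x y)" by (rule bilinear_comb[OF PattD(1)[OF x] PattD(1)[OF y]])
    show "comb t x y v v = 0" for v using PattD(2)[OF x] PattD(2)[OF y] unfolding comb_def by simp
    show "comb t x y (e a) (e b) = 0" if "a < 2*n" "b < 2*n" "a + b < 2*n - 1" for a b
      using PattD(3)[OF x that] PattD(3)[OF y that] unfolding comb_def by simp
    show "comb t x y (e a) (e (2*n - 1 - a)) \<noteq> 0" if "a < n" for a using D[OF that] by blast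
  qed
  then show ?thesis using D by blast
qed

lemma comp_eq:
  assumes P: "Patt \<omega>0"
  shows "connected_component_set (OmegaF n F) \<omega>0 = Cls \<omega>0"
proof (intro equalityI subsetI)
  fix \<omega>1 assume w1: "\<omega>1 \<in> Cls \<omega>0"
  then have P1: "Patt \<omega>1" and s1: "\<forall>a<n. sg \<omega>1 a = sg \<omega>0 a" unfolding Cls_def by auto
  let ?T = "(\<lambda>t. comb t \<omega>1 \<omega>0) ` {0..1}"
  have "connected ?T" by (rule connected_continuous_image[OF comb_cont]) simp
  moreover have "?T \<subseteq> OmegaF n F"
    using Patt_comb[OF P1 P s1] Patt_Omega by auto
  moreover have "\<omega>0 \<in> ?T"
  proof
    show "\<omega>0 = comb 0 \<omega>1 \<omega>0" unfolding comb_def by simp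
  qed simp
  moreover have "\<omega>1 \<in> ?T"
  proof
    show "\<omega>1 = comb 1 \<omega>1 \<omega>0" unfolding comb_def by simp
  qed simp
  ultimately have "connected_component (OmegaF n F) \<omega>0 \<omega>1" by (rule connected_componentI)
  then show "\<omega>1 \<in> connected_component_set (OmegaF n F) \<omega>0" by simp
next
  fix \<omega>1 assume w1: "\<omega>1 \<in> connected_component_set (OmegaF n F) \<omega>0"
  let ?C = "connected_component_set (OmegaF n F) \<omega>0"
  have C: "connected ?C" "?C \<subseteq> OmegaF n F" "\<omega>0 \<in> ?C"
    using connected_connected_component connected_component_subset Patt_Omega[OF P]
    by (auto simp: connected_component_refl_eq)
  have P1: "Patt \<omega>1" using w1 C(2) Omega_Patt by blast
  have "sg \<omega>1 a = sg \<omega>0 a" if a: "a < n" for a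
  proof (rule ccontr)
    assume ne: "sg \<omega>1 a \<noteq> sg \<omega>0 a"
    let ?f = "\<lambda>\<omega>::'v\<Rightarrow>'v\<Rightarrow>real. \<omega> (e a) (e (2*n - 1 - a))"
    have cf: "connected (?f ` ?C)" by (rule connected_continuous_image[OF eval_cont C(1)])
    have f0: "?f \<omega>0 \<noteq> 0" "?f \<omega>1 \<noteq> 0" using PattD(4)[OF P a] PattD(4)[OF P1 a] by auto
    have "0 \<in> ?f ` ?C"
    proof (cases "0 < ?f \<omega>0")
      case True
      then have "?f \<omega>1 < 0" using ne f0 unfolding sg_def by auto
      then show ?thesis using connected_contains_Icc[OF cf, of "?f \<omega>1" "?f \<omega>0"] True w1 C(3) by auto
    next
      case False
      then have "?f \<omega>0 < 0" "0 < ?f \<omega>1" using ne f0 unfolding sg_def by auto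
      then show ?thesis using connected_contains_Icc[OF cf, of "?f \<omega>0" "?f \<omega>1"] w1 C(3) by auto
    qed
    then obtain \<omega> where w: "\<omega> \<in> ?C" "?f \<omega> = 0" by auto
    then have "Patt \<omega>" using C(2) Omega_Patt by blast
    then show False using PattD(4)[OF _ a] w(2) by blast
  qed
  then show "\<omega>1 \<in> Cls \<omega>0" unfolding Cls_def using P1 by auto
qed

end


lemma ldet_cong:
  assumes "\<And>i k. i < d \<Longrightarrow> k < d \<Longrightarrow> A i k = B i k"
  shows "ldet d A = ldet d B"
  unfolding ldet_def
proof (intro sum.cong refl arg_cong2[where f="(*)"] prod.cong)
  fix p i assume p: "p \<in> {p. p permutes {..<d}}" and i: "i \<in> {..<d}"
  then have "p i < d" using permutes_in_image[of p "{..<d}" i] by auto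
  then show "A i (p i) = B i (p i)" using assms i by auto
qed

lemma Pf_cong:
  assumes "\<And>a b. a < 2*m \<Longrightarrow> b < 2*m \<Longrightarrow> A a b = B a b"
  shows "Pf m A = Pf m B"
  unfolding Pf_def
proof (intro sum.cong refl arg_cong2[where f="(*)"] prod.cong)
  fix p i assume p: "p \<in> {p. p permutes {..<2*m}}" and i: "i \<in> {..<m}"
  then have "p (2*i) < 2*m" "p (2*i+1) < 2*m" using permutes_in_image[of p "{..<2*m}"] by auto
  then show "A (p (2*i)) (p (2*i+1)) = B (p (2*i)) (p (2*i+1))" using assms by auto
qed

locale qctx = flagctx +
  fixes j :: nat
  assumes j_lt: "j < n"
begin

definition pj :: "nat \<Rightarrow> nat" where
  "pj k = (if even k then j + k div 2 else 2*n - 1 - j - k div 2)"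

definition rho where "rho k = e (pj k)"

definition TT where
  "TT bs i k = e (pj k) \<bullet> (bs ! i)"

abbreviation "dd \<equiv> 2*(n - j)"
abbreviation "AA \<equiv> F (2*n - j)"
abbreviation "BB \<equiv> F j"

definition Pos where
  "Pos = {cs. qbasis AA BB cs \<and> 0 < ldet dd (TT cs)}"
definition Neg where
  "Neg = {cs. qbasis AA BB cs \<and> \<not> 0 < ldet dd (TT cs)}"

lemma pj_range: "k < dd \<Longrightarrow> j \<le> pj k \<and> pj k < 2*n - j"
  unfolding pj_def using j_lt by (auto elim!: evenE oddE)

lemma pj_lt: "k < dd \<Longrightarrow> pj k < 2*n"
  using pj_range by fastforce

lemma pj_inj: "k < dd \<Longrightarrow> k' < dd \<Longrightarrow> pj k = pj k' \<Longrightarrow> k = k'"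
  unfolding pj_def using j_lt by (auto split: if_splits elim!: evenE oddE)

lemma pj_surj: "j \<le> b \<Longrightarrow> b < 2*n - j \<Longrightarrow> \<exists>k<dd. pj k = b"
proof -
  assume b: "j \<le> b" "b < 2*n - j"
  show ?thesis
  proof (cases "b < n")
    case True
    show ?thesis by (rule exI[of _ "2*(b - j)"]) (use True b in \<open>auto simp: pj_def\<close>)
  next
    case False
    show ?thesis by (rule exI[of _ "2*(2*n - 1 - j - b) + 1"]) (use False b j_lt in \<open>auto simp: pj_def\<close>)
  qed
qed

lemma BA: "BB \<subseteq> AA"
  using F_mono[of j "2*n - j"] j_lt by auto

lemma subA: "subspace AA" using F_sub[of "2*n - j"] by simp
lemma subB: "subspace BB" using F_sub[of j] j_lt by simp

lemma dimdiff: "dim AA - dim BB = dd"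
  using F_dim[of "2*n - j"] F_dim[of j] j_lt by auto

lemma rho_in: "k < dd \<Longrightarrow> rho k \<in> AA"
  unfolding rho_def using e_in[of "pj k"] F_mono[of "Suc (pj k)" "2*n - j"] pj_range[of k] by auto

lemma coord_rho: "k < dd \<Longrightarrow> k' < dd \<Longrightarrow> e (pj k) \<bullet> rho k' = (if k = k' then 1 else 0)"
  unfolding rho_def using e_orthonormal[OF pj_lt pj_lt] pj_inj by auto

lemma B_iff:
  assumes x: "x \<in> AA"
  shows "x \<in> BB \<longleftrightarrow> (\<forall>k<dd. e (pj k) \<bullet> x = 0)"
proof
  assume "x \<in> BB"
  then show "\<forall>k<dd. e (pj k) \<bullet> x = 0"
    using F_char[of j] j_lt pj_range pj_lt by auto
next
  assume H: "\<forall>k<dd. e (pj k) \<bullet> x = 0"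
  have "\<forall>b. j \<le> b \<longrightarrow> b < 2*n \<longrightarrow> e b \<bullet> x = 0"
  proof (intro allI impI)
    fix b assume b: "j \<le> b" "b < 2*n"
    show "e b \<bullet> x = 0"
    proof (cases "b < 2*n - j")
      case True
      then obtain k where "k < dd" "pj k = b" using pj_surj b by blast
      then show ?thesis using H by auto
    next
      case False
      then show ?thesis using x F_char[of "2*n - j"] b by auto
    qed
  qed
  then show "x \<in> BB" using F_char[of j] j_lt by auto
qed

lemma Q1:
  assumes bs: "set bs \<subseteq> AA" and cs: "set cs \<subseteq> AA" and i: "i < length cs"
  shows "(cs!i - (\<Sum>l<length bs. M i l *\<^sub>R bs!l) \<in> BB)
     \<longleftrightarrow> (\<forall>k<dd. TT cs i k = (\<Sum>l<length bs. M i l * TT bs l k))"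
proof -
  let ?z = "cs!i - (\<Sum>l<length bs. M i l *\<^sub>R bs!l)"
  have zA: "?z \<in> AA"
  proof (rule subspace_diff[OF subA])
    show "cs!i \<in> AA" using cs i nth_mem by blast
    show "(\<Sum>l<length bs. M i l *\<^sub>R bs!l) \<in> AA"
      by (rule subspace_sum[OF subA], rule subspace_scale[OF subA]) (use bs nth_mem in blast)
  qed
  have "e (pj k) \<bullet> ?z = TT cs i k - (\<Sum>l<length bs. M i l * TT bs l k)" for k
    unfolding TT_def by (simp add: inner_diff_right inner_sum_right)
  then show ?thesis using B_iff[OF zA] by auto
qed

lemma Q2:
  assumes len: "length bs = dd" and bs: "set bs \<subseteq> AA"
  shows "qbasis AA BB bs \<longleftrightarrow> ldet dd (TT bs) \<noteq> 0"
proof -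
  have "(\<Sum>i<dd. c i *\<^sub>R bs!i) \<in> BB \<longleftrightarrow> (\<forall>k<dd. (\<Sum>i<dd. c i * TT bs i k) = 0)" for c
  proof -
    have zA: "(\<Sum>i<dd. c i *\<^sub>R bs!i) \<in> AA"
      by (rule subspace_sum[OF subA], rule subspace_scale[OF subA]) (use bs len nth_mem in fastforce)
    have "e (pj k) \<bullet> (\<Sum>i<dd. c i *\<^sub>R bs!i) = (\<Sum>i<dd. c i * TT bs i k)" for k
      unfolding TT_def by (simp add: inner_sum_right)
    then show ?thesis using B_iff[OF zA] by auto
  qed
  then show ?thesis
    unfolding qbasis_def ldet_nonzero_iff using len bs dimdiff by auto
qed

lemma Q3:
  assumes b: "qbasis AA BB bs" and c: "qbasis AA BB cs"
  shows "same_orient AA BB bs cs \<longleftrightarrow> ((0 < ldet dd (TT bs)) = (0 < ldet dd (TT cs)))"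
proof -
  have lb: "length bs = dd" "set bs \<subseteq> AA" and lc: "length cs = dd" "set cs \<subseteq> AA"
    using b c dimdiff unfolding qbasis_def by auto
  have nb: "ldet dd (TT bs) \<noteq> 0" using Q2[OF lb] b by blast
  have nc: "ldet dd (TT cs) \<noteq> 0" using Q2[OF lc] c by blast
  have key: "(\<forall>i<length cs. cs ! i - (\<Sum>l<length bs. M i l *\<^sub>R bs ! l) \<in> BB)
      \<longleftrightarrow> (\<forall>i<dd. \<forall>k<dd. TT cs i k = (\<Sum>l<dd. M i l * TT bs l k))" for M
  proof -
    have "\<And>i. i < length cs \<Longrightarrow> (cs ! i - (\<Sum>l<length bs. M i l *\<^sub>R bs ! l) \<in> BB)
       \<longleftrightarrow> (\<forall>k<dd. TT cs i k = (\<Sum>l<length bs. M i l * TT bs l k))"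
      by (rule Q1[OF lb(2) lc(2)])
    then show ?thesis unfolding lb(1) lc(1) by blast
  qed
  show ?thesis
  proof
    assume "same_orient AA BB bs cs"
    then obtain M where M: "\<forall>i<length cs. cs ! i - (\<Sum>l<length bs. M i l *\<^sub>R bs ! l) \<in> BB"
      and pos: "0 < ldet (length bs) M" unfolding same_orient_def by blast
    have MM: "\<forall>i<dd. \<forall>k<dd. TT cs i k = (\<Sum>l<dd. M i l * TT bs l k)" using M key[of M] by blast
    have "ldet dd (TT cs) = ldet dd (\<lambda>i k. \<Sum>l<dd. M i l * TT bs l k)"
      by (rule ldet_cong) (use MM in blast)
    also have "\<dots> = ldet dd M * ldet dd (TT bs)" by (rule ldet_mult)
    finally have eq: "ldet dd (TT cs) = ldet dd M * ldet dd (TT bs)" .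
    have pos': "0 < ldet dd M" using pos lb(1) by simp
    show "(0 < ldet dd (TT bs)) = (0 < ldet dd (TT cs))"
      unfolding eq using pos' nb by (simp add: zero_less_mult_iff)
  next
    assume s: "(0 < ldet dd (TT bs)) = (0 < ldet dd (TT cs))"
    obtain Inv where Inv: "\<forall>i<dd. \<forall>k<dd. (\<Sum>l<dd. Inv i l * TT bs l k) = (if i = k then 1 else 0)"
      using ldet_inverse[OF nb] by blast
    define M where "M i k = (\<Sum>l<dd. TT cs i l * Inv l k)" for i k
    have MT: "(\<Sum>l<dd. M i l * TT bs l k) = TT cs i k" if "i < dd" "k < dd" for i k
    proof -
      have "(\<Sum>l<dd. M i l * TT bs l k) = (\<Sum>l<dd. \<Sum>l'<dd. TT cs i l' * Inv l' l * TT bs l k)"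
        unfolding M_def by (simp add: sum_distrib_right)
      also have "\<dots> = (\<Sum>l'<dd. \<Sum>l<dd. TT cs i l' * Inv l' l * TT bs l k)"
        by (rule sum.swap)
      also have "\<dots> = (\<Sum>l'<dd. TT cs i l' * (\<Sum>l<dd. Inv l' l * TT bs l k))"
        by (simp add: sum_distrib_left mult.assoc)
      also have "\<dots> = (\<Sum>l'<dd. TT cs i l' * (if l' = k then 1 else 0))"
        using Inv that by (intro sum.cong refl) auto
      also have "\<dots> = TT cs i k" using that by (simp add: if_distrib cong: if_cong)
      finally show ?thesis .
    qed
    have MM: "\<forall>i<dd. \<forall>k<dd. TT cs i k = (\<Sum>l<dd. M i l * TT bs l k)" using MT by simp
    have "ldet dd (TT cs) = ldet dd (\<lambda>i k. \<Sum>l<dd. M i l * TT bs l k)"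
      by (rule ldet_cong) (use MM in blast)
    also have "\<dots> = ldet dd M * ldet dd (TT bs)" by (rule ldet_mult)
    finally have eq: "ldet dd (TT cs) = ldet dd M * ldet dd (TT bs)" .
    have "0 < ldet dd M"
    proof (cases "0 < ldet dd (TT bs)")
      case True
      then have "0 < ldet dd M * ldet dd (TT bs)" using s eq by simp
      then show ?thesis using True by (simp add: zero_less_mult_iff)
    next
      case False
      then have "ldet dd (TT bs) < 0" using nb by simp
      moreover have "ldet dd M * ldet dd (TT bs) < 0"
      proof -
        have "\<not> 0 < ldet dd (TT cs)" using s False by simp
        then have "ldet dd (TT cs) < 0" using nc by linarith
        then show ?thesis using eq by simp
      qed
      ultimately show ?thesis by (simp add: mult_less_0_iff)
    qed
    moreover have "\<forall>i<length cs. cs ! i - (\<Sum>l<length bs. M i l *\<^sub>R bs ! l) \<in> BB"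
      using MM key[of M] by blast
    ultimately show "same_orient AA BB bs cs"
      unfolding same_orient_def using b c lb(1) by auto
  qed
qed

lemma class_eq:
  assumes b: "qbasis AA BB bs"
  shows "{cs. same_orient AA BB bs cs} = (if 0 < ldet dd (TT bs) then Pos else Neg)"
proof -
  have "same_orient AA BB bs cs \<longleftrightarrow> qbasis AA BB cs \<and> (0 < ldet dd (TT bs)) = (0 < ldet dd (TT cs))" for cs
  proof
    assume h: "same_orient AA BB bs cs"
    then have c: "qbasis AA BB cs" unfolding same_orient_def by blast
    show "qbasis AA BB cs \<and> (0 < ldet dd (TT bs)) = (0 < ldet dd (TT cs))" using Q3[OF b c] h c by blast
  next
    assume h: "qbasis AA BB cs \<and> (0 < ldet dd (TT bs)) = (0 < ldet dd (TT cs))"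
    then show "same_orient AA BB bs cs" using Q3[OF b] by blast
  qed
  then show ?thesis unfolding Pos_def Neg_def by auto
qed

definition rholist where "rholist = map rho [0..<dd]"
definition rhoneg where "rhoneg = map (\<lambda>k. if k = 0 then - rho k else rho k) [0..<dd]"

lemma TT_rholist: "i < dd \<Longrightarrow> k < dd \<Longrightarrow> TT rholist i k = (if i = k then 1 else 0)"
  unfolding TT_def rholist_def using coord_rho by auto

lemma TT_rhoneg: "i < dd \<Longrightarrow> k < dd \<Longrightarrow> TT rhoneg i k = (if i = k then (if i = 0 then -1 else 1) else 0)"
  unfolding TT_def rhoneg_def using coord_rho by auto

lemma ldet_rholist: "ldet dd (TT rholist) = 1"
proof -
  have "ldet dd (TT rholist) = (\<Prod>i<dd. TT rholist i i)"
    by (rule ldet_lower) (simp add: TT_rholist)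
  also have "\<dots> = 1" by (simp add: TT_rholist)
  finally show ?thesis .
qed

lemma ldet_rhoneg: "ldet dd (TT rhoneg) = -1"
proof -
  have "ldet dd (TT rhoneg) = (\<Prod>i<dd. TT rhoneg i i)"
    by (rule ldet_lower) (simp add: TT_rhoneg)
  also have "\<dots> = (\<Prod>i<dd. if i = 0 then -1 else 1)" by (simp add: TT_rhoneg)
  also have "\<dots> = -1"
  proof -
    have "dd = Suc (dd - 1)" using j_lt by simp
    then have "(\<Prod>i<dd. (if i = 0 then -1 else 1::real)) = (\<Prod>i<Suc (dd - 1). (if i = 0 then -1 else 1))" by simp
    also have "\<dots> = -1" by (simp only: prod.lessThan_Suc_shift) simp
    finally show ?thesis .
  qed
  finally show ?thesis .
qed

lemma rholist_q: "qbasis AA BB rholist"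
proof -
  have "set rholist \<subseteq> AA" unfolding rholist_def using rho_in by auto
  moreover have "length rholist = dd" unfolding rholist_def by simp
  ultimately show ?thesis using Q2 ldet_rholist by auto
qed

lemma rhoneg_q: "qbasis AA BB rhoneg"
proof -
  have "set rhoneg \<subseteq> AA"
    unfolding rhoneg_def using rho_in subspace_neg[OF subA] by auto
  moreover have "length rhoneg = dd" unfolding rhoneg_def by simp
  ultimately show ?thesis using Q2 ldet_rhoneg by auto
qed

lemma Pos_ne_Neg: "Pos \<noteq> Neg"
  using rholist_q ldet_rholist unfolding Pos_def Neg_def by auto

lemma orientations_eq: "orientations AA BB = {Pos, Neg}"
proof
  show "orientations AA BB \<subseteq> {Pos, Neg}"
  proof
    fix Or assume "Or \<in> orientations AA BB"
    then obtain bs where Or: "Or = {cs. same_orient AA BB bs cs}" and b: "qbasis AA BB bs"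
      unfolding orientations_def by blast
    show "Or \<in> {Pos, Neg}" unfolding Or class_eq[OF b] by simp
  qed
  have "Pos = {cs. same_orient AA BB rholist cs}" using class_eq[OF rholist_q] ldet_rholist by simp
  then have "Pos \<in> orientations AA BB"
    unfolding orientations_def using rholist_q by blast
  moreover have "Neg = {cs. same_orient AA BB rhoneg cs}" using class_eq[OF rhoneg_q] ldet_rhoneg by simp
  then have "Neg \<in> orientations AA BB"
    unfolding orientations_def using rhoneg_q by blast
  ultimately show "{Pos, Neg} \<subseteq> orientations AA BB" by blast
qed

end


lemma JmE: "Jm (2*l) k = (if k = 2*l+1 then 1 else 0)"
  unfolding Jm_def by (auto; presburger)

lemma JmO: "Jm (2*l+1) k = (if k = 2*l then -1 else 0)"
  unfolding Jm_def by auto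

lemma JmO': "Jm (Suc (2*l)) k = (if k = 2*l then -1 else 0)"
  using JmO by simp

locale sctx = qctx +
  fixes \<omega>
  assumes P: "Patt \<omega>"
begin

definition del where "del l = \<omega> (rho (2*l)) (rho (2*l+1))"
definition Low where "Low l = (\<lambda>i. rho (2*i)) ` {..<l}"

lemma bil: "bilinear \<omega>" using PattD(1)[OF P] .
lemma alt: "\<omega> v v = 0" using PattD(2)[OF P] .
lemma asym: "\<omega> u v = - \<omega> v u" using antisym[OF bil] alt by blast

lemma lin1: "linear (\<lambda>x. \<omega> z x)" using bil by (simp add: bilinear_def)
lemma lin2: "linear (\<lambda>x. \<omega> x z)" using bil by (simp add: bilinear_def)

lemma pj_even: "pj (2*i) = j + i" by (simp add: pj_def)
lemma pj_odd: "pj (2*i+1) = 2*n - 1 - j - i" by (simp add: pj_def)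

lemma H1: "i < n-j \<Longrightarrow> i' < n-j \<Longrightarrow> \<omega> (rho (2*i)) (rho (2*i')) = 0"
  unfolding rho_def pj_even by (rule PattD(3)[OF P]) (use j_lt in auto)

lemma H2: "i < i' \<Longrightarrow> i' < n-j \<Longrightarrow> \<omega> (rho (2*i)) (rho (2*i'+1)) = 0"
  unfolding rho_def pj_even pj_odd by (rule PattD(3)[OF P]) (use j_lt in auto)

lemma del_alt: "l < n-j \<Longrightarrow> del l = \<omega> (e (j+l)) (e (2*n - 1 - (j+l)))"
  unfolding del_def rho_def pj_even pj_odd by (simp add: diff_diff_left)

lemma H3: "l < n-j \<Longrightarrow> del l \<noteq> 0"
  using del_alt Patt_Dnz[OF P, of "j+l"] j_lt by auto

lemma spanR0:
  assumes "x \<in> span S" "\<And>s. s \<in> S \<Longrightarrow> \<omega> z s = 0"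
  shows "\<omega> z x = 0"
  by (rule linear_eq_0_on_span[OF lin1]) (use assms in auto)

lemma spanL0:
  assumes "x \<in> span S" "\<And>s. s \<in> S \<Longrightarrow> \<omega> s z = 0"
  shows "\<omega> x z = 0"
  by (rule linear_eq_0_on_span[OF lin2]) (use assms in auto)

lemma Low_mono: "l \<le> l' \<Longrightarrow> Low l \<subseteq> Low l'"
  unfolding Low_def by auto

lemma GS_step:
  assumes p: "Suc p \<le> n-j"
   and I1: "\<forall>l<p. c (2*l) - (1/del l) *\<^sub>R rho (2*l) \<in> span (Low l)"
   and I2: "\<forall>l<p. c (2*l+1) - rho (2*l+1) \<in> span (rho ` {..<2*l+1})"
   and I3: "\<forall>a<2*p. \<forall>b<2*p. \<omega> (c a) (c b) = Jm a b"
  shows "\<exists>c'. (\<forall>l<Suc p. c' (2*l) - (1/del l) *\<^sub>R rho (2*l) \<in> span (Low l))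
     \<and> (\<forall>l<Suc p. c' (2*l+1) - rho (2*l+1) \<in> span (rho ` {..<2*l+1}))
     \<and> (\<forall>a<2*Suc p. \<forall>b<2*Suc p. \<omega> (c' a) (c' b) = Jm a b)"
proof -
  have D1: "c (2*l) \<in> span (Low (Suc l))" if "l < p" for l
  proof -
    have "c (2*l) = (c (2*l) - (1/del l) *\<^sub>R rho (2*l)) + (1/del l) *\<^sub>R rho (2*l)" by simp
    moreover have "c (2*l) - (1/del l) *\<^sub>R rho (2*l) \<in> span (Low (Suc l))"
      using I1 that span_mono[OF Low_mono[of l "Suc l"]] by auto
    moreover have "rho (2*l) \<in> span (Low (Suc l))" unfolding Low_def by (intro span_base) auto
    ultimately show ?thesis by (metis span_add span_mul)
  qed
  have D2: "c k \<in> span (rho ` {..<2*p})" if "k < 2*p" for k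
  proof (cases "even k")
    case True
    then obtain l where k: "k = 2*l" by (auto elim: evenE)
    then have l: "l < p" using that by simp
    have "Low (Suc l) \<subseteq> rho ` {..<2*p}" unfolding Low_def using l by auto
    then show ?thesis using D1[OF l] span_mono k by blast
  next
    case False
    then obtain l where k: "k = 2*l+1" by (auto elim: oddE)
    then have l: "l < p" using that by simp
    have s1: "span (rho ` {..<2*l+1}) \<subseteq> span (rho ` {..<2*p})" using l by (intro span_mono) auto
    have "c (2*l+1) = (c (2*l+1) - rho (2*l+1)) + rho (2*l+1)" by simp
    moreover have "c (2*l+1) - rho (2*l+1) \<in> span (rho ` {..<2*p})" using I2 l s1 by blast
    moreover have "rho (2*l+1) \<in> span (rho ` {..<2*p})" using l by (intro span_base) auto
    ultimately show ?thesis using k by (metis span_add)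
  qed
  have D3: "\<omega> (rho (2*i)) (c (2*l)) = 0" if "i < n-j" "l < p" for i l
    by (rule spanR0[OF D1[OF that(2)]]) (use that p H1 in \<open>auto simp: Low_def\<close>)
  have D4: "\<omega> (c (2*l)) (rho (2*p+1)) = 0" if "l < p" for l
    by (rule spanL0[OF D1[OF that]]) (use that p H2 in \<open>auto simp: Low_def\<close>)
  define Pj where "Pj z = z - (\<Sum>l<p. \<omega> z (c (2*l+1)) *\<^sub>R c (2*l) - \<omega> z (c (2*l)) *\<^sub>R c (2*l+1))" for z
  have wPj: "\<omega> (Pj z) w = \<omega> z w - (\<Sum>l<p. \<omega> z (c (2*l+1)) * \<omega> (c (2*l)) w - \<omega> z (c (2*l)) * \<omega> (c (2*l+1)) w)" for z w
  proof -
    interpret L: linear "\<lambda>x. \<omega> x w" by (rule lin2)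
    show ?thesis unfolding Pj_def by (simp add: L.diff L.sum L.scale)
  qed
  have G: "\<omega> (c a) (c k) = Jm a k" if "a < 2*p" "k < 2*p" for a k using I3 that by blast
  have D5: "\<omega> (Pj z) (c k) = 0" if k: "k < 2*p" for z k
  proof -
    have "(\<Sum>l<p. \<omega> z (c (2*l+1)) * \<omega> (c (2*l)) (c k) - \<omega> z (c (2*l)) * \<omega> (c (2*l+1)) (c k))
        = (\<Sum>l<p. \<omega> z (c (2*l+1)) * (if k = 2*l+1 then 1 else 0) + \<omega> z (c (2*l)) * (if k = 2*l then 1 else 0))"
    proof (intro sum.cong refl)
      fix l assume "l \<in> {..<p}"
      then have "2*l < 2*p" "2*l+1 < 2*p" by auto
      then show "\<omega> z (c (2*l+1)) * \<omega> (c (2*l)) (c k) - \<omega> z (c (2*l)) * \<omega> (c (2*l+1)) (c k)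
        = \<omega> z (c (2*l+1)) * (if k = 2*l+1 then 1 else 0) + \<omega> z (c (2*l)) * (if k = 2*l then 1 else 0)"
        using G[OF _ k] by (simp add: JmE JmO JmO')
    qed
    also have "\<dots> = \<omega> z (c k)"
    proof (cases "even k")
      case True
      then obtain l0 where k0: "k = 2*l0" by (auto elim: evenE)
      have l0: "l0 < p" using k k0 by simp
      have "(\<Sum>l<p. \<omega> z (c (2*l+1)) * (if k = 2*l+1 then 1 else 0) + \<omega> z (c (2*l)) * (if k = 2*l then 1 else 0))
          = (\<Sum>l<p. if l = l0 then \<omega> z (c (2*l)) else 0)"
        by (intro sum.cong refl) (auto simp: k0)
      also have "\<dots> = \<omega> z (c k)" using l0 k0 by simp
      finally show ?thesis .
    next
      case False
      then obtain l0 where k0: "k = 2*l0+1" by (auto elim: oddE)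
      have l0: "l0 < p" using k k0 by simp
      have "(\<Sum>l<p. \<omega> z (c (2*l+1)) * (if k = 2*l+1 then 1 else 0) + \<omega> z (c (2*l)) * (if k = 2*l then 1 else 0))
          = (\<Sum>l<p. if l = l0 then \<omega> z (c (2*l+1)) else 0)"
        by (intro sum.cong refl) (auto simp: k0)
      also have "\<dots> = \<omega> z (c k)" using l0 k0 by simp
      finally show ?thesis .
    qed
    finally show ?thesis using wPj by simp
  qed
  have D6: "\<omega> (c k) (Pj z) = 0" if "k < 2*p" for z k
    using D5[OF that, of z] asym[of "c k" "Pj z"] by simp
  define x where "x = Pj (rho (2*p))"
  define y where "y = Pj (rho (2*p+1))"
  have Zx: "\<omega> x (c k) = 0" if "k < 2*p" for k unfolding x_def using D5[OF that] .
  have kap: "\<omega> x y = del p"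
  proof -
    interpret R: linear "\<lambda>w. \<omega> x w" by (rule lin1)
    have "\<omega> x y = \<omega> x (rho (2*p+1)) - (\<Sum>l<p. \<omega> (rho (2*p+1)) (c (2*l+1)) * \<omega> x (c (2*l)) - \<omega> (rho (2*p+1)) (c (2*l)) * \<omega> x (c (2*l+1)))"
      unfolding y_def Pj_def by (simp add: R.diff R.sum R.scale)
    also have "(\<Sum>l<p. \<omega> (rho (2*p+1)) (c (2*l+1)) * \<omega> x (c (2*l)) - \<omega> (rho (2*p+1)) (c (2*l)) * \<omega> x (c (2*l+1))) = 0"
      by (rule sum.neutral) (use Zx in auto)
    also have "\<omega> x (rho (2*p+1)) = \<omega> (rho (2*p)) (rho (2*p+1)) - (\<Sum>l<p. \<omega> (rho (2*p)) (c (2*l+1)) * \<omega> (c (2*l)) (rho (2*p+1)) - \<omega> (rho (2*p)) (c (2*l)) * \<omega> (c (2*l+1)) (rho (2*p+1)))"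
      unfolding x_def by (rule wPj)
    also have "(\<Sum>l<p. \<omega> (rho (2*p)) (c (2*l+1)) * \<omega> (c (2*l)) (rho (2*p+1)) - \<omega> (rho (2*p)) (c (2*l)) * \<omega> (c (2*l+1)) (rho (2*p+1))) = 0"
      by (rule sum.neutral) (use D3 D4 p in auto)
    finally show ?thesis unfolding del_def by simp
  qed
  have dp: "del p \<noteq> 0" using H3 p by simp
  define c' where "c' = c(2*p := (1/del p) *\<^sub>R x, 2*p+1 := y)"
  have c'lo: "c' k = c k" if "k < 2*p" for k unfolding c'_def using that by simp
  have c'a: "c' (2*p) = (1/del p) *\<^sub>R x" unfolding c'_def by simp
  have c'b: "c' (2*p+1) = y" unfolding c'_def by simp
  have N1: "\<forall>l<Suc p. c' (2*l) - (1/del l) *\<^sub>R rho (2*l) \<in> span (Low l)"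
  proof (intro allI impI)
    fix l assume l: "l < Suc p"
    show "c' (2*l) - (1/del l) *\<^sub>R rho (2*l) \<in> span (Low l)"
    proof (cases "l < p")
      case True then show ?thesis using I1 c'lo[of "2*l"] by simp
    next
      case False
      then have lp: "l = p" using l by simp
      have "x - rho (2*p) = - (\<Sum>l<p. \<omega> (rho (2*p)) (c (2*l+1)) *\<^sub>R c (2*l) - \<omega> (rho (2*p)) (c (2*l)) *\<^sub>R c (2*l+1))"
        unfolding x_def Pj_def by simp
      also have "\<dots> \<in> span (Low p)"
      proof (rule span_neg, rule span_sum)
        fix l assume l: "l \<in> {..<p}"
        have "c (2*l) \<in> span (Low p)" using D1[of l] l span_mono[OF Low_mono[of "Suc l" p]] by auto
        moreover have "\<omega> (rho (2*p)) (c (2*l)) = 0" using D3[of p l] l p by simp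
        ultimately show "\<omega> (rho (2*p)) (c (2*l+1)) *\<^sub>R c (2*l) - \<omega> (rho (2*p)) (c (2*l)) *\<^sub>R c (2*l+1) \<in> span (Low p)"
          by (simp add: span_mul)
      qed
      finally have "x - rho (2*p) \<in> span (Low p)" .
      then have "(1/del p) *\<^sub>R (x - rho (2*p)) \<in> span (Low p)" by (rule span_mul)
      then show ?thesis using lp c'a by (simp add: scaleR_diff_right)
    qed
  qed
  have N2: "\<forall>l<Suc p. c' (2*l+1) - rho (2*l+1) \<in> span (rho ` {..<2*l+1})"
  proof (intro allI impI)
    fix l assume l: "l < Suc p"
    show "c' (2*l+1) - rho (2*l+1) \<in> span (rho ` {..<2*l+1})"
    proof (cases "l < p")
      case True then show ?thesis using I2 c'lo[of "2*l+1"] by simp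
    next
      case False
      then have lp: "l = p" using l by simp
      have "y - rho (2*p+1) = - (\<Sum>l<p. \<omega> (rho (2*p+1)) (c (2*l+1)) *\<^sub>R c (2*l) - \<omega> (rho (2*p+1)) (c (2*l)) *\<^sub>R c (2*l+1))"
        unfolding y_def Pj_def by simp
      also have "\<dots> \<in> span (rho ` {..<2*p})"
      proof (rule span_neg, rule span_sum)
        fix l assume l: "l \<in> {..<p}"
        have "c (2*l) \<in> span (rho ` {..<2*p})" "c (2*l+1) \<in> span (rho ` {..<2*p})" using D2 l by auto
        then show "\<omega> (rho (2*p+1)) (c (2*l+1)) *\<^sub>R c (2*l) - \<omega> (rho (2*p+1)) (c (2*l)) *\<^sub>R c (2*l+1) \<in> span (rho ` {..<2*p})"
          by (simp add: span_mul span_diff)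
      qed
      also have "span (rho ` {..<2*p}) \<subseteq> span (rho ` {..<2*p+1})" by (intro span_mono) auto
      finally show ?thesis using lp c'b by simp
    qed
  qed
  have PjF: "\<exists>r z. c' b = r *\<^sub>R Pj z" if "2*p \<le> b" "b < 2*Suc p" for b
  proof (cases "b = 2*p")
    case True then show ?thesis using c'a unfolding x_def by blast
  next
    case False
    then have "b = 2*p+1" using that by simp
    then have "c' b = 1 *\<^sub>R Pj (rho (2*p+1))" using c'b unfolding y_def by simp
    then show ?thesis by blast
  qed
  have N3: "\<forall>a<2*Suc p. \<forall>b<2*Suc p. \<omega> (c' a) (c' b) = Jm a b"
  proof (intro allI impI)
    fix a b assume a: "a < 2*Suc p" and b: "b < 2*Suc p"
    show "\<omega> (c' a) (c' b) = Jm a b"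
    proof (cases "a < 2*p")
      case a1: True
      show ?thesis
      proof (cases "b < 2*p")
        case True then show ?thesis using a1 c'lo G by simp
      next
        case False
        then obtain r z where rz: "c' b = r *\<^sub>R Pj z" using PjF b by force
        have "\<omega> (c' a) (c' b) = 0" unfolding rz c'lo[OF a1] using D6[OF a1] bilinear_rmul[OF bil] by simp
        moreover have "Jm a b = 0"
        proof -
          have "a div 2 \<noteq> b div 2" using a1 False by presburger
          then show ?thesis unfolding Jm_alt by simp
        qed
        ultimately show ?thesis by simp
      qed
    next
      case a2: False
      show ?thesis
      proof (cases "b < 2*p")
        case True
        obtain r z where rz: "c' a = r *\<^sub>R Pj z" using PjF a a2 by force
        have "\<omega> (c' a) (c' b) = 0" unfolding rz c'lo[OF True] using D5[OF True] bilinear_lmul[OF bil] by simp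
        moreover have "Jm a b = 0"
        proof -
          have "a div 2 \<noteq> b div 2" using a2 True by presburger
          then show ?thesis unfolding Jm_alt by simp
        qed
        ultimately show ?thesis by simp
      next
        case False
        have aa: "a = 2*p \<or> a = 2*p+1" using a a2 by auto
        have bb: "b = 2*p \<or> b = 2*p+1" using b False by auto
        have w1: "\<omega> (c' (2*p)) (c' (2*p+1)) = 1"
          unfolding c'a c'b using kap dp bilinear_lmul[OF bil] by simp
        have w2: "\<omega> (c' (2*p+1)) (c' (2*p)) = -1"
          using w1 asym[of "c' (2*p+1)" "c' (2*p)"] by simp
        show ?thesis using aa bb w1 w2 alt by (auto simp: Jm_def)
      qed
    qed
  qed
  show ?thesis using N1 N2 N3 by blast
qed

lemma GS:
  "p \<le> n-j \<Longrightarrow> \<exists>c. (\<forall>l<p. c (2*l) - (1/del l) *\<^sub>R rho (2*l) \<in> span (Low l))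
     \<and> (\<forall>l<p. c (2*l+1) - rho (2*l+1) \<in> span (rho ` {..<2*l+1}))
     \<and> (\<forall>a<2*p. \<forall>b<2*p. \<omega> (c a) (c b) = Jm a b)"
proof (induction p)
  case 0 then show ?case by auto
next
  case (Suc p)
  then obtain c where "\<forall>l<p. c (2*l) - (1/del l) *\<^sub>R rho (2*l) \<in> span (Low l)"
     "\<forall>l<p. c (2*l+1) - rho (2*l+1) \<in> span (rho ` {..<2*l+1})"
     "\<forall>a<2*p. \<forall>b<2*p. \<omega> (c a) (c b) = Jm a b" by auto
  then show ?case using GS_step[OF Suc.prems] by blast
qed

end


context sctx
begin

lemma coord_span0:
  assumes u: "u \<in> span (rho ` {..<a})" and ak: "a \<le> k" and k: "k < dd"
  shows "e (pj k) \<bullet> u = 0"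
proof (rule linear_eq_0_on_span[OF bounded_linear.linear[OF bounded_linear_inner_right] _ u])
  fix x assume "x \<in> rho ` {..<a}"
  then obtain k' where k': "k' < a" "x = rho k'" by auto
  then show "e (pj k) \<bullet> x = 0" using coord_rho[OF k, of k'] ak k by auto
qed

lemma span_rho_A: "a \<le> dd \<Longrightarrow> span (rho ` {..<a}) \<subseteq> AA"
  by (rule span_minimal[OF _ subA]) (use rho_in in auto)

lemma symp_exists: "\<exists>cs. sympl_qbasis \<omega> AA BB cs \<and> ldet dd (TT cs) = (\<Prod>l<n-j. 1/del l)"
proof -
  obtain c where I1: "\<forall>l<n-j. c (2*l) - (1/del l) *\<^sub>R rho (2*l) \<in> span (Low l)"
     and I2: "\<forall>l<n-j. c (2*l+1) - rho (2*l+1) \<in> span (rho ` {..<2*l+1})"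
     and I3: "\<forall>a<dd. \<forall>b<dd. \<omega> (c a) (c b) = Jm a b"
    using GS[of "n-j"] by auto
  define dg where "dg a = (if even a then 1/del (a div 2) else 1)" for a
  have rem: "c a - dg a *\<^sub>R rho a \<in> span (rho ` {..<a})" if a: "a < dd" for a
  proof (cases "even a")
    case True
    then obtain l where al: "a = 2*l" by (auto elim: evenE)
    then have l: "l < n-j" using a by simp
    have "Low l \<subseteq> rho ` {..<a}" unfolding Low_def al by auto
    then show ?thesis using I1 l span_mono[of "Low l" "rho ` {..<a}"] al unfolding dg_def by auto
  next
    case False
    then obtain l where al: "a = 2*l+1" by (auto elim: oddE)
    then have l: "l < n-j" using a by simp
    show ?thesis using I2 l al unfolding dg_def by auto
  qed
  have cA: "c a \<in> AA" if a: "a < dd" for a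
  proof -
    have "c a = (c a - dg a *\<^sub>R rho a) + dg a *\<^sub>R rho a" by simp
    moreover have "c a - dg a *\<^sub>R rho a \<in> AA" using rem[OF a] span_rho_A[of a] a by auto
    moreover have "dg a *\<^sub>R rho a \<in> AA" using rho_in[OF a] subspace_scale[OF subA] by blast
    ultimately show ?thesis using subspace_add[OF subA] by metis
  qed
  define cs where "cs = map c [0..<dd]"
  have len: "length cs = dd" unfolding cs_def by simp
  have csn: "cs ! a = c a" if "a < dd" for a unfolding cs_def using that by simp
  have setA: "set cs \<subseteq> AA" unfolding cs_def using cA by auto
  have TTv: "TT cs a k = (if k = a then dg a else 0)" if ak: "a \<le> k" "k < dd" for a k
  proof -
    have a: "a < dd" using ak by simp
    have "TT cs a k = e (pj k) \<bullet> ((c a - dg a *\<^sub>R rho a) + dg a *\<^sub>R rho a)"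
      unfolding TT_def csn[OF a] by simp
    also have "\<dots> = e (pj k) \<bullet> (c a - dg a *\<^sub>R rho a) + dg a * (e (pj k) \<bullet> rho a)"
      by (simp only: inner_add_right inner_scaleR_right)
    also have "e (pj k) \<bullet> (c a - dg a *\<^sub>R rho a) = 0"
      by (rule coord_span0[OF rem[OF a] ak])
    also have "e (pj k) \<bullet> rho a = (if k = a then 1 else 0)" using coord_rho[OF ak(2) a] .
    finally show ?thesis by simp
  qed
  have ld: "ldet dd (TT cs) = (\<Prod>l<n-j. 1/del l)"
  proof -
    have "ldet dd (TT cs) = (\<Prod>i<dd. TT cs i i)"
      by (rule ldet_lower) (simp add: TTv)
    also have "\<dots> = (\<Prod>i<dd. dg i)" by (intro prod.cong refl) (simp add: TTv)
    also have "\<dots> = (\<Prod>l<n-j. dg (2*l) * dg (2*l+1))" by (rule prod_pairs)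
    also have "\<dots> = (\<Prod>l<n-j. 1/del l)" unfolding dg_def by simp
    finally show ?thesis .
  qed
  have "ldet dd (TT cs) \<noteq> 0" unfolding ld using H3 by simp
  then have qb: "qbasis AA BB cs" using Q2[OF len setA] by simp
  have "sympl_qbasis \<omega> AA BB cs"
    unfolding sympl_qbasis_def
  proof (intro conjI qb allI impI)
    fix a b assume "a < length cs" "b < length cs"
    then have ab: "a < dd" "b < dd" using len by auto
    show "\<omega> (cs ! a) (cs ! b) = (if even a \<and> b = Suc a then 1 else if even b \<and> a = Suc b then -1 else 0)"
      using I3 ab csn unfolding Jm_def by simp
  qed
  then show ?thesis using ld by blast
qed

lemma orthAB:
  assumes v: "v \<in> AA" and w: "w \<in> BB"
  shows "\<omega> v w = 0" "\<omega> w v = 0"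
proof -
  have "sorth \<omega> (F j) = F (2*n - j)" using Patt_sorth[OF P, of j] j_lt by simp
  then show "\<omega> v w = 0" using v w unfolding sorth_def by auto
  then show "\<omega> w v = 0" using asym[of w v] by simp
qed

lemma gram:
  assumes setA: "set cs \<subseteq> AA" and len: "length cs = dd" and a: "a < dd" and b: "b < dd"
  shows "\<omega> (cs!a) (cs!b) = (\<Sum>k<dd. \<Sum>l<dd. TT cs a k * TT cs b l * \<omega> (rho k) (rho l))"
proof -
  define u where "u i = (\<Sum>k<dd. TT cs i k *\<^sub>R rho k)" for i
  have rl: "set rholist \<subseteq> AA" "length rholist = dd" "\<And>l. l < dd \<Longrightarrow> rholist ! l = rho l"
    unfolding rholist_def using rho_in by auto
  have dec: "cs!i - u i \<in> BB" if i: "i < dd" for i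
  proof -
    have "\<forall>k<dd. TT cs i k = (\<Sum>l<length rholist. TT cs i l * TT rholist l k)"
    proof (intro allI impI)
      fix k assume k: "k < dd"
      have "(\<Sum>l<length rholist. TT cs i l * TT rholist l k) = (\<Sum>l<dd. if l = k then TT cs i l else 0)"
        using rl(2) TT_rholist k by (intro sum.cong) auto
      also have "\<dots> = TT cs i k" using k by simp
      finally show "TT cs i k = (\<Sum>l<length rholist. TT cs i l * TT rholist l k)" by simp
    qed
    then have "cs!i - (\<Sum>l<length rholist. TT cs i l *\<^sub>R rholist ! l) \<in> BB"
      using Q1[OF rl(1) setA, of i "TT cs"] i len by simp
    moreover have "(\<Sum>l<length rholist. TT cs i l *\<^sub>R rholist ! l) = u i"
      unfolding u_def rl(2) using rl(3) by (intro sum.cong) auto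
    ultimately show ?thesis by simp
  qed
  have uA: "u i \<in> AA" for i
    unfolding u_def by (rule subspace_sum[OF subA], rule subspace_scale[OF subA]) (use rho_in in auto)
  have bA: "cs!i - u i \<in> AA" if "i < dd" for i using dec[OF that] BA by auto
  have "\<omega> (cs!a) (cs!b) = \<omega> (u a + (cs!a - u a)) (u b + (cs!b - u b))" by simp
  also have "\<dots> = \<omega> (u a) (u b) + \<omega> (u a) (cs!b - u b) + (\<omega> (cs!a - u a) (u b) + \<omega> (cs!a - u a) (cs!b - u b))"
    by (simp only: bilinear_ladd[OF bil] bilinear_radd[OF bil])
  also have "\<omega> (u a) (cs!b - u b) = 0" by (rule orthAB(1)[OF uA dec[OF b]])
  also have "\<omega> (cs!a - u a) (u b) = 0" by (rule orthAB(2)[OF uA dec[OF a]])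
  also have "\<omega> (cs!a - u a) (cs!b - u b) = 0" by (rule orthAB(2)[OF bA[OF b] dec[OF a]])
  also have "\<omega> (u a) (u b) = (\<Sum>k<dd. \<Sum>l<dd. TT cs a k * TT cs b l * \<omega> (rho k) (rho l))"
  proof -
    interpret L: linear "\<lambda>x. \<omega> x (u b)" by (rule lin2)
    have "\<omega> (u a) (u b) = (\<Sum>k<dd. TT cs a k * \<omega> (rho k) (u b))"
      unfolding u_def[of a] by (simp add: L.sum L.scale)
    also have "\<dots> = (\<Sum>k<dd. TT cs a k * (\<Sum>l<dd. TT cs b l * \<omega> (rho k) (rho l)))"
    proof (intro sum.cong refl arg_cong2[where f="(*)"])
      fix k
      interpret R: linear "\<lambda>x. \<omega> (rho k) x" by (rule lin1)
      show "\<omega> (rho k) (u b) = (\<Sum>l<dd. TT cs b l * \<omega> (rho k) (rho l))"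
        unfolding u_def[of b] by (simp add: R.sum R.scale)
    qed
    also have "\<dots> = (\<Sum>k<dd. \<Sum>l<dd. TT cs a k * TT cs b l * \<omega> (rho k) (rho l))"
      by (simp add: sum_distrib_left mult.assoc)
    finally show ?thesis .
  qed
  finally show ?thesis by simp
qed

lemma sympl_det:
  assumes s: "sympl_qbasis \<omega> AA BB cs"
  shows "ldet dd (TT cs) * Pf (n-j) (\<lambda>k l. \<omega> (rho k) (rho l)) = Pf (n-j) Jm"
proof -
  have qb: "qbasis AA BB cs" and J: "\<forall>a<length cs. \<forall>b<length cs. \<omega> (cs ! a) (cs ! b) = Jm a b"
    using s unfolding sympl_qbasis_def Jm_def by auto
  have len: "length cs = dd" and setA: "set cs \<subseteq> AA" using qb dimdiff unfolding qbasis_def by auto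
  have "Pf (n-j) Jm = Pf (n-j) (\<lambda>a b. \<Sum>k<dd. \<Sum>l<dd. TT cs a k * TT cs b l * \<omega> (rho k) (rho l))"
  proof (rule Pf_cong)
    fix a b assume "a < dd" "b < dd"
    then show "Jm a b = (\<Sum>k<dd. \<Sum>l<dd. TT cs a k * TT cs b l * \<omega> (rho k) (rho l))"
      using J gram[OF setA len] len by auto
  qed
  also have "\<dots> = ldet dd (TT cs) * Pf (n-j) (\<lambda>k l. \<omega> (rho k) (rho l))"
    by (rule Pf_mult)
  finally show ?thesis by simp
qed

lemma induced: "induced_orient \<omega> AA BB = (if 0 < (\<Prod>l<n-j. del l) then Pos else Neg)"
proof -
  obtain c0 where c0: "sympl_qbasis \<omega> AA BB c0" and l0: "ldet dd (TT c0) = (\<Prod>l<n-j. 1/del l)"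
    using symp_exists by blast
  let ?W = "Pf (n-j) (\<lambda>k l. \<omega> (rho k) (rho l))"
  have PJ: "Pf (n-j) Jm > 0" by (rule Pf_Jm_pos)
  have W0: "?W \<noteq> 0" using sympl_det[OF c0] PJ by auto
  have same: "ldet dd (TT cs) = ldet dd (TT c0)" if "sympl_qbasis \<omega> AA BB cs" for cs
    using sympl_det[OF that] sympl_det[OF c0] W0 by (metis mult_right_cancel)
  have sg: "(0 < ldet dd (TT c0)) = (0 < (\<Prod>l<n-j. del l))"
  proof -
    have "(\<Prod>l<n-j. 1/del l) = (\<Prod>l<n-j. 1) / (\<Prod>l<n-j. del l)" by (rule prod_dividef)
    then show ?thesis using l0 by simp
  qed
  define X where "X = (if 0 < (\<Prod>l<n-j. del l) then Pos else Neg)"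
  have cls: "{bs. same_orient AA BB cs bs} = X" if "sympl_qbasis \<omega> AA BB cs" for cs
  proof -
    have "qbasis AA BB cs" using that unfolding sympl_qbasis_def by blast
    then show ?thesis using class_eq same[OF that] sg unfolding X_def by simp
  qed
  have "induced_orient \<omega> AA BB = X"
  proof
    show "induced_orient \<omega> AA BB \<subseteq> X" unfolding induced_orient_def using cls by blast
    show "X \<subseteq> induced_orient \<omega> AA BB" unfolding induced_orient_def using cls[OF c0] c0 by blast
  qed
  then show ?thesis unfolding X_def .
qed

end


context qctx
begin

lemma orient_pair:
  "Pos \<noteq> Neg \<and> orientations AA BB = {Pos, Neg} \<and>
   (\<forall>\<omega>. Patt \<omega> \<longrightarrow> induced_orient \<omega> AA BB =
      (if 0 < (\<Prod>l<n-j. \<omega> (e (j+l)) (e (2*n - 1 - (j+l)))) then Pos else Neg))"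
proof (intro conjI allI impI)
  show "Pos \<noteq> Neg" by (rule Pos_ne_Neg)
  show "orientations AA BB = {Pos, Neg}" by (rule orientations_eq)
  fix \<omega> assume P: "Patt \<omega>"
  interpret s: sctx n F e j \<omega> by unfold_locales (fact P)
  have "(\<Prod>l<n-j. s.del l) = (\<Prod>l<n-j. \<omega> (e (j+l)) (e (2*n - 1 - (j+l))))"
    by (intro prod.cong refl) (simp add: s.del_alt)
  then show "induced_orient \<omega> AA BB =
      (if 0 < (\<Prod>l<n-j. \<omega> (e (j+l)) (e (2*n - 1 - (j+l)))) then Pos else Neg)"
    using s.induced by simp
qed

end

context flagctx
begin

definition sig :: "('v \<Rightarrow> 'v \<Rightarrow> real) \<Rightarrow> nat \<Rightarrow> bool" where
  "sig \<omega> j = (0 < (\<Prod>l<n-j. \<omega> (e (j+l)) (e (2*n - 1 - (j+l)))))"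

lemma PN_exists:
  "\<exists>Po Ne. \<forall>j<n. Po j \<noteq> Ne j \<and> orientations (F (2*n - j)) (F j) = {Po j, Ne j} \<and>
     (\<forall>\<omega>. Patt \<omega> \<longrightarrow> induced_orient \<omega> (F (2*n - j)) (F j) = (if sig \<omega> j then Po j else Ne j))"
proof -
  define Q where "Q j pn \<longleftrightarrow> (fst pn \<noteq> snd pn \<and> orientations (F (2*n - j)) (F j) = {fst pn, snd pn} \<and>
     (\<forall>\<omega>. Patt \<omega> \<longrightarrow> induced_orient \<omega> (F (2*n - j)) (F j) = (if sig \<omega> j then fst pn else snd pn)))"
    for j and pn :: "'v list set \<times> 'v list set"
  have ch: "\<forall>j. \<exists>pn. j < n \<longrightarrow> Q j pn"
  proof
    fix j
    show "\<exists>pn. j < n \<longrightarrow> Q j pn"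
    proof (cases "j < n")
      case True
      interpret q: qctx n F e j by unfold_locales (fact True)
      have op1: "q.Pos \<noteq> q.Neg" "orientations (F (2*n-j)) (F j) = {q.Pos, q.Neg}"
        using q.orient_pair by blast+
      have op3: "induced_orient \<omega> (F (2*n-j)) (F j) = (if sig \<omega> j then q.Pos else q.Neg)" if "Patt \<omega>" for \<omega>
        using q.orient_pair that unfolding sig_def by blast
      have "Q j (q.Pos, q.Neg)" unfolding Q_def using op1 op3 by simp
      then show ?thesis by blast
    qed simp
  qed
  obtain f where f: "\<forall>j. j < n \<longrightarrow> Q j (f j)" using choice[OF ch] by (elim exE)
  have "\<forall>j<n. fst (f j) \<noteq> snd (f j) \<and> orientations (F (2*n - j)) (F j) = {fst (f j), snd (f j)} \<and>
     (\<forall>\<omega>. Patt \<omega> \<longrightarrow> induced_orient \<omega> (F (2*n - j)) (F j) = (if sig \<omega> j then fst (f j) else snd (f j)))"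
    using f unfolding Q_def by simp
  then show ?thesis by (intro exI[of _ "\<lambda>j. fst (f j)"] exI[of _ "\<lambda>j. snd (f j)"])
qed

lemma sig_n: "sig \<omega> n"
  unfolding sig_def by simp

lemma sig_rec:
  assumes P: "Patt \<omega>" and j: "j < n"
  shows "sig \<omega> j = (sg \<omega> j = sig \<omega> (Suc j))"
proof -
  let ?D = "\<lambda>a. \<omega> (e a) (e (2*n - 1 - a))"
  have nj: "n - j = Suc (n - Suc j)" using j by simp
  have "(\<Prod>l<n-j. \<omega> (e (j+l)) (e (2*n - 1 - (j+l)))) = (\<Prod>l<Suc (n - Suc j). ?D (j+l))"
    unfolding nj ..
  also have "\<dots> = ?D j * (\<Prod>l<n - Suc j. ?D (Suc j + l))"
    by (simp only: prod.lessThan_Suc_shift) simp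
  finally have eq: "(\<Prod>l<n-j. \<omega> (e (j+l)) (e (2*n - 1 - (j+l)))) = ?D j * (\<Prod>l<n - Suc j. ?D (Suc j + l))" .
  have Dj: "?D j \<noteq> 0" using Patt_Dnz[OF P, of j] j by simp
  have Q: "(\<Prod>l<n - Suc j. ?D (Suc j + l)) \<noteq> 0"
    using Patt_Dnz[OF P] by (simp add: prod_zero_iff)
  have "sig \<omega> (Suc j) = (0 < (\<Prod>l<n - Suc j. ?D (Suc j + l)))" unfolding sig_def by simp
  then show ?thesis unfolding sig_def eq sg_def using Dj Q
    by (auto simp: zero_less_mult_iff)
qed

lemma sig_from_sg:
  assumes P1: "Patt \<omega>1" and P2: "Patt \<omega>2" and s: "\<forall>a<n. sg \<omega>1 a = sg \<omega>2 a"
  shows "sig \<omega>1 j = sig \<omega>2 j"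
proof -
  have "\<forall>j. n - j = k \<longrightarrow> sig \<omega>1 j = sig \<omega>2 j" for k
  proof (induction k)
    case 0 then show ?case unfolding sig_def by simp
  next
    case (Suc k)
    show ?case
    proof (intro allI impI)
      fix j assume jk: "n - j = Suc k"
      then have j: "j < n" and "n - Suc j = k" by auto
      then have "sig \<omega>1 (Suc j) = sig \<omega>2 (Suc j)" using Suc.IH by blast
      then show "sig \<omega>1 j = sig \<omega>2 j" using sig_rec[OF P1 j] sig_rec[OF P2 j] s j by simp
    qed
  qed
  then show ?thesis by blast
qed

lemma sg_from_sig:
  assumes P1: "Patt \<omega>1" and P2: "Patt \<omega>2" and s: "\<forall>j<n. sig \<omega>1 j = sig \<omega>2 j"
  shows "\<forall>a<n. sg \<omega>1 a = sg \<omega>2 a"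
proof (intro allI impI)
  fix a assume a: "a < n"
  have "sig \<omega>1 (Suc a) = sig \<omega>2 (Suc a)"
  proof (cases "Suc a < n")
    case True then show ?thesis using s by blast
  next
    case False then have "Suc a = n" using a by simp
    then show ?thesis by (metis sig_n)
  qed
  then show "sg \<omega>1 a = sg \<omega>2 a" using sig_rec[OF P1 a] sig_rec[OF P2 a] s a by auto
qed

definition mkf where
  "mkf s = (\<lambda>u v. \<Sum>a<n. (if s a then 1 else -1) * ((e a \<bullet> u) * (e (2*n - 1 - a) \<bullet> v) - (e (2*n - 1 - a) \<bullet> u) * (e a \<bullet> v)))"

lemma mkf_e:
  assumes x: "x < 2*n" and y: "y < 2*n"
  shows "mkf s (e x) (e y) = (\<Sum>a<n. (if s a then 1 else -1) *
     ((if a = x then 1 else 0) * (if 2*n - 1 - a = y then 1 else 0) - (if 2*n - 1 - a = x then 1 else 0) * (if a = y then 1 else 0)))"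
  unfolding mkf_def
proof (intro sum.cong refl)
  fix a assume a: "a \<in> {..<n}"
  then have a2: "a < 2*n" "2*n - 1 - a < 2*n" by auto
  have "e a \<bullet> e x = (if a = x then 1 else 0)" "e (2*n - 1 - a) \<bullet> e y = (if 2*n - 1 - a = y then 1 else 0)"
    "e (2*n - 1 - a) \<bullet> e x = (if 2*n - 1 - a = x then 1 else 0)" "e a \<bullet> e y = (if a = y then 1 else 0)"
    using e_orthonormal a2 x y by auto
  then show "(if s a then 1 else -1) * ((e a \<bullet> e x) * (e (2*n - 1 - a) \<bullet> e y) - (e (2*n - 1 - a) \<bullet> e x) * (e a \<bullet> e y))
     = (if s a then 1 else -1) * ((if a = x then 1 else 0) * (if 2*n - 1 - a = y then 1 else 0) - (if 2*n - 1 - a = x then 1 else 0) * (if a = y then 1 else 0))"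
    by (simp only:)
qed

lemma mkf_Patt: "Patt (mkf s) \<and> (\<forall>a<n. sg (mkf s) a = s a)"
proof -
  have bil: "bilinear (mkf s)"
    unfolding bilinear_def
  proof (intro conjI allI)
    fix u show "linear (\<lambda>v. mkf s u v)"
      unfolding mkf_def
      by (rule linear_compose_sum) (auto intro!: linearI simp: inner_add_right algebra_simps)
  next
    fix v show "linear (\<lambda>u. mkf s u v)"
      unfolding mkf_def
      by (rule linear_compose_sum) (auto intro!: linearI simp: inner_add_right algebra_simps)
  qed
  have alt: "mkf s v v = 0" for v unfolding mkf_def by simp
  have zero: "mkf s (e x) (e y) = 0" if "x < 2*n" "y < 2*n" "x + y < 2*n - 1" for x y
    unfolding mkf_e[OF that(1,2)] using that by (intro sum.neutral) auto
  have D: "mkf s (e b) (e (2*n - 1 - b)) = (if s b then 1 else -1)" if b: "b < n" for b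
  proof -
    have "mkf s (e b) (e (2*n - 1 - b)) = (\<Sum>a<n. (if s a then 1 else -1) *
     ((if a = b then 1 else 0) * (if 2*n - 1 - a = 2*n - 1 - b then 1 else 0) - (if 2*n - 1 - a = b then 1 else 0) * (if a = 2*n - 1 - b then 1 else 0)))"
      by (rule mkf_e) (use b in auto)
    also have "\<dots> = (\<Sum>a<n. if a = b then (if s a then 1 else -1) else 0)"
      by (intro sum.cong refl) (use b in auto)
    also have "\<dots> = (if s b then 1 else -1)" using b by simp
    finally show ?thesis .
  qed
  have "Patt (mkf s)" unfolding Patt_def using bil alt zero D by auto
  moreover have "\<forall>a<n. sg (mkf s) a = s a" unfolding sg_def using D by auto
  ultimately show ?thesis by blast
qed

lemma sig_realize: "\<exists>\<omega>. Patt \<omega> \<and> (\<forall>j<n. sig \<omega> j = want j)"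
proof -
  define want' where "want' k = (if k < n then want k else True)" for k
  define s where "s a = (want' a = want' (Suc a))" for a
  have P: "Patt (mkf s)" and S: "\<forall>a<n. sg (mkf s) a = s a" using mkf_Patt by blast+
  have "\<forall>j. n - j = k \<longrightarrow> sig (mkf s) j = want' j" for k
  proof (induction k)
    case 0 then show ?case unfolding sig_def want'_def by simp
  next
    case (Suc k)
    show ?case
    proof (intro allI impI)
      fix j assume jk: "n - j = Suc k"
      then have j: "j < n" and "n - Suc j = k" by auto
      then have "sig (mkf s) (Suc j) = want' (Suc j)" using Suc.IH by blast
      then show "sig (mkf s) j = want' j" using sig_rec[OF P j] S j unfolding s_def by auto
    qed
  qed
  then have "\<forall>j<n. sig (mkf s) j = want j" unfolding want'_def by auto
  then show ?thesis using P by blast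
qed

end


context flagctx
begin

lemma main_loc:
  "(\<exists>G. bij_betw G {connected_component_set (OmegaF n F) \<omega> | \<omega>. \<omega> \<in> OmegaF n F}
                 (\<Pi>\<^sub>E j\<in>{..<n}. orientations (F (2*n - j)) (F j))
           \<and> (\<forall>\<omega>\<in>OmegaF n F. G (connected_component_set (OmegaF n F) \<omega>)
                 = (\<lambda>j\<in>{..<n}. induced_orient \<omega> (F (2*n - j)) (F j))))
     \<and> (\<forall>\<omega>\<in>OmegaF n F. convex_forms (connected_component_set (OmegaF n F) \<omega>))"
proof -
  obtain Po Ne where PN: "\<forall>j<n. Po j \<noteq> Ne j \<and> orientations (F (2*n - j)) (F j) = {Po j, Ne j} \<and>
     (\<forall>\<omega>. Patt \<omega> \<longrightarrow> induced_orient \<omega> (F (2*n - j)) (F j) = (if sig \<omega> j then Po j else Ne j))"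
    using PN_exists by (elim exE)
  have PNne: "\<And>j. j < n \<Longrightarrow> Po j \<noteq> Ne j" using PN by blast
  have PNor: "\<And>j. j < n \<Longrightarrow> orientations (F (2*n - j)) (F j) = {Po j, Ne j}" using PN by blast
  have PNind: "\<And>j \<omega>. j < n \<Longrightarrow> Patt \<omega> \<Longrightarrow> induced_orient \<omega> (F (2*n - j)) (F j) = (if sig \<omega> j then Po j else Ne j)"
    using PN by blast
  have OmP: "\<omega> \<in> OmegaF n F \<longleftrightarrow> Patt \<omega>" for \<omega> using Omega_eq by auto
  define ind where "ind \<omega> = (\<lambda>j\<in>{..<n}. induced_orient \<omega> (F (2*n - j)) (F j))" for \<omega>
  have ind_sig: "ind \<omega> = (\<lambda>j\<in>{..<n}. if sig \<omega> j then Po j else Ne j)" if P: "Patt \<omega>" for \<omega>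
    unfolding ind_def by (intro restrict_ext) (simp add: PNind[OF _ P])
  have ind_cls: "ind \<omega>' = ind \<omega>" if P: "Patt \<omega>" and w: "\<omega>' \<in> Cls \<omega>" for \<omega> \<omega>'
  proof -
    have P': "Patt \<omega>'" and s: "\<forall>a<n. sg \<omega>' a = sg \<omega> a" using w unfolding Cls_def by auto
    have "sig \<omega>' j = sig \<omega> j" for j by (rule sig_from_sg[OF P' P s])
    then show ?thesis unfolding ind_sig[OF P] ind_sig[OF P'] by simp
  qed
  define G where "G C = ind (SOME \<omega>. \<omega> \<in> C)" for C
  have Gc: "G (connected_component_set (OmegaF n F) \<omega>) = ind \<omega>" if w: "\<omega> \<in> OmegaF n F" for \<omega>
  proof -
    have P: "Patt \<omega>" using w OmP by blast
    have "\<omega> \<in> Cls \<omega>" unfolding Cls_def using P by simp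
    then have "(SOME \<omega>'. \<omega>' \<in> Cls \<omega>) \<in> Cls \<omega>" by (rule someI[of "\<lambda>x. x \<in> Cls \<omega>" \<omega>])
    then show ?thesis unfolding G_def comp_eq[OF P] using ind_cls[OF P] by blast
  qed
  let ?Comps = "{connected_component_set (OmegaF n F) \<omega> | \<omega>. \<omega> \<in> OmegaF n F}"
  have inj: "inj_on G ?Comps"
  proof (rule inj_onI)
    fix C1 C2 assume C1: "C1 \<in> ?Comps" and C2: "C2 \<in> ?Comps" and eq: "G C1 = G C2"
    obtain \<omega>1 where w1: "\<omega>1 \<in> OmegaF n F" "C1 = connected_component_set (OmegaF n F) \<omega>1" using C1 by blast
    obtain \<omega>2 where w2: "\<omega>2 \<in> OmegaF n F" "C2 = connected_component_set (OmegaF n F) \<omega>2" using C2 by blast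
    have P1: "Patt \<omega>1" and P2: "Patt \<omega>2" using w1 w2 OmP by blast+
    have ie: "ind \<omega>1 = ind \<omega>2" using eq Gc[OF w1(1)] Gc[OF w2(1)] w1 w2 by simp
    have "sig \<omega>1 j = sig \<omega>2 j" if j: "j < n" for j
    proof -
      have "ind \<omega>1 j = ind \<omega>2 j" using ie by simp
      then have "(if sig \<omega>1 j then Po j else Ne j) = (if sig \<omega>2 j then Po j else Ne j)"
        unfolding ind_sig[OF P1] ind_sig[OF P2] using j by simp
      then show ?thesis using PNne[OF j] by (auto split: if_splits)
    qed
    then have "\<forall>a<n. sg \<omega>1 a = sg \<omega>2 a" using sg_from_sig[OF P1 P2] by blast
    then have "Cls \<omega>1 = Cls \<omega>2" unfolding Cls_def by auto
    then show "C1 = C2" using w1 w2 comp_eq[OF P1] comp_eq[OF P2] by simp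
  qed
  have img: "G ` ?Comps = (\<Pi>\<^sub>E j\<in>{..<n}. orientations (F (2*n - j)) (F j))"
  proof
    show "G ` ?Comps \<subseteq> (\<Pi>\<^sub>E j\<in>{..<n}. orientations (F (2*n - j)) (F j))"
    proof
      fix X assume "X \<in> G ` ?Comps"
      then obtain \<omega> where w: "\<omega> \<in> OmegaF n F" "X = G (connected_component_set (OmegaF n F) \<omega>)" by blast
      have P: "Patt \<omega>" using w OmP by blast
      have "X = (\<lambda>j\<in>{..<n}. if sig \<omega> j then Po j else Ne j)" using w Gc ind_sig[OF P] by simp
      then show "X \<in> (\<Pi>\<^sub>E j\<in>{..<n}. orientations (F (2*n - j)) (F j))" using PNor by auto
    qed
  next
    show "(\<Pi>\<^sub>E j\<in>{..<n}. orientations (F (2*n - j)) (F j)) \<subseteq> G ` ?Comps"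
    proof
      fix X assume X: "X \<in> (\<Pi>\<^sub>E j\<in>{..<n}. orientations (F (2*n - j)) (F j))"
      obtain \<omega> where P: "Patt \<omega>" and sw: "\<forall>j<n. sig \<omega> j = (X j = Po j)"
        using sig_realize[of "\<lambda>j. X j = Po j"] by blast
      have w: "\<omega> \<in> OmegaF n F" using P OmP by blast
      have "ind \<omega> = X"
      proof
        fix j show "ind \<omega> j = X j"
        proof (cases "j < n")
          case True
          have "X j \<in> {Po j, Ne j}" using X PNor[OF True] True by auto
          then show ?thesis unfolding ind_sig[OF P] using True sw by auto
        next
          case False
          then show ?thesis unfolding ind_sig[OF P] using X by (auto simp: PiE_def extensional_def)
        qed
      qed
      then have "X = G (connected_component_set (OmegaF n F) \<omega>)" using Gc[OF w] by simp
      moreover have "connected_component_set (OmegaF n F) \<omega> \<in> ?Comps" using w by blast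
      ultimately show "X \<in> G ` ?Comps" by blast
    qed
  qed
  have part1: "bij_betw G ?Comps (\<Pi>\<^sub>E j\<in>{..<n}. orientations (F (2*n - j)) (F j))
    \<and> (\<forall>\<omega>\<in>OmegaF n F. G (connected_component_set (OmegaF n F) \<omega>) = (\<lambda>j\<in>{..<n}. induced_orient \<omega> (F (2*n - j)) (F j)))"
    using inj img Gc unfolding bij_betw_def ind_def by blast
  have part2: "convex_forms (connected_component_set (OmegaF n F) \<omega>)" if w: "\<omega> \<in> OmegaF n F" for \<omega>
  proof -
    have P: "Patt \<omega>" using w OmP by blast
    show ?thesis unfolding comp_eq[OF P] convex_forms_def
    proof (intro ballI allI impI)
      fix x y and t :: real assume x: "x \<in> Cls \<omega>" and y: "y \<in> Cls \<omega>" and t: "0 \<le> t \<and> t \<le> 1"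
      have Px: "Patt x" "\<forall>a<n. sg x a = sg \<omega> a" and Py: "Patt y" "\<forall>a<n. sg y a = sg \<omega> a"
        using x y unfolding Cls_def by auto
      then have "\<forall>a<n. sg x a = sg y a" by simp
      then have "Patt (comb t x y) \<and> (\<forall>a<n. sg (comb t x y) a = sg x a)"
        using Patt_comb[OF Px(1) Py(1)] t by blast
      then have "comb t x y \<in> Cls \<omega>" unfolding Cls_def using Px by simp
      then show "(\<lambda>u v. t * x u v + (1 - t) * y u v) \<in> Cls \<omega>" unfolding comb_def .
    qed
  qed
  show ?thesis using part1 part2 by blast
qed

end

theorem lemma3p9:
  fixes n :: nat and F :: "nat \<Rightarrow> 'v::euclidean_space set"
  assumes "DIM('v) = 2 * n"
    and "full_flag n F"
  shows "(\<exists>G. bij_betw G {connected_component_set (OmegaF n F) \<omega> | \<omega>. \<omega> \<in> OmegaF n F}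
                 (\<Pi>\<^sub>E j\<in>{..<n}. orientations (F (2*n - j)) (F j))
           \<and> (\<forall>\<omega>\<in>OmegaF n F. G (connected_component_set (OmegaF n F) \<omega>)
                 = (\<lambda>j\<in>{..<n}. induced_orient \<omega> (F (2*n - j)) (F j))))
     \<and> (\<forall>\<omega>\<in>OmegaF n F. convex_forms (connected_component_set (OmegaF n F) \<omega>))"
proof -
  obtain e :: "nat \<Rightarrow> 'v" where e: "\<forall>a<2*n. e a \<in> F (Suc a) \<and> (\<forall>x\<in>F a. e a \<bullet> x = 0) \<and> e a \<bullet> e a = 1"
    using flag_basis_exists[OF assms] by (elim exE)
  interpret flagctx n F e
    by unfold_locales (use assms e in auto)
  show ?thesis by (rule main_loc)
qed


end
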